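(* Let $d\in\mathbb{N}$, $I_d\subseteq\{1,\ldots,d\}$, and let $n\in\mathbb{N}$ be prime with $n\ge c_R$. Let $z_1^*\in\{1,\ldots,n-1\}$ be arbitrary, and for $\ell=2,\ldots,d$ successively choose $z_\ell^*\in\mathbb{Z}_n$ as a minimizer of $z_\ell\mapsto B_{I_d,\ell}(z_1^*,\ldots,z_{\ell-1}^*,z_\ell)$ over $z_\ell\in\mathbb{Z}_n$, where $$B_{I_d,\ell}(z_1,\ldots,z_\ell):=\sum_{\substack{\mathfrak{u}\subseteq\{1,\ldots,\ell\},\\ \ell\in\mathfrak{u}}} c_{\mathfrak{u},I_d}^{-1}\sum_{\mathbf{h}_{\mathfrak{u}}\in(\mathbb{Z}\setminus\{0\})^{\mathfrak{u}}}\frac{\mathbb{M}_{\mathfrak{u},I_d}(\mathbf{h}_{\mathfrak{u}})!}{\#\mathcal{S}_{\mathfrak{u},I_d}}\, r_{\alpha,\boldsymbol{\beta}}^{-1}(\mathbf{h}_{\mathfrak{u}})\,\mathbf{1}\{\mathbf{h}_{\mathfrak{u}}\in L(\mathbf{z}_{\mathfrak{u}},n)^{\perp}\},\qquad c_{\mathfrak{u},I_d}:=\beta_0^{\#\mathfrak{u}}\binom{\#I_d}{\#(I_d\cap\mathfrak{u})}.$$ Then there exists $\boldsymbol{\Delta}^*\in[0,1)^d$ such that the shifted rank-1 lattice rule $Q_{d,n}:=Q_{d,n}(z_1^*,\ldots,z_d^* )+\boldsymbol{\Delta}^*$ satisfies $$e^{\mathrm{wor}}(Q_{d,n};\mathfrak{S}_{I_d}(F_d(r_{\alpha,\boldsymbol{\beta}})))^2\le(1+c_R)^\lambda\,C_{d,\lambda}(r_{\alpha,\boldsymbol{\beta}})\,\max\{1,\#I_d\}\,\frac{1}{n^\lambda}\quad\text{for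 all }1\le\lambda<2\alpha,$$ where $C_{d,\lambda}(r_{\alpha,\boldsymbol{\beta}}):=\Big(\sum_{\mathbf{0}\ne\mathbf{h}\in\mathbb{Z}^d}\Big[\frac{\mathbb{M}_d(\mathbf{h})!}{\#\mathcal{S}_d}\,r_{\alpha,\boldsymbol{\beta}}^{-1}(\mathbf{h})\Big]^{1/\lambda}\Big)^\lambda$.
   Context: Standing setting. $R\colon[1,\infty)\to(0,\infty)$ is a function such that $\frac{1}{c_R}R(m)\le \frac{R(nm)}{n}\le R(m)$ for all $n,m\in\mathbb{N}$ with some constant $c_R\ge 1$, and $\mu_R(\alpha):=\sum_{m=1}^\infty R(m)^{-2\alpha}<\infty$ for the smoothness parameter $\alpha\ge 0$ (these imply $\alpha>1/2$). $\boldsymbol{\beta}=(\beta_0,\beta_1)$ are positive parameters. For a nonempty finite index set $\mathfrak{u}$ and $\mathbf{k}\in\mathbb{Z}^{\mathfrak{u}}$ put $r_{\alpha,\boldsymbol{\beta}}(\mathbf{k}):=\prod_{\ell\in\mathfrak{u}}\big(\delta_{0,k_\ell}\beta_0^{-1}+(1-\delta_{0,k_\ell})\beta_1^{-1}R(|k_\ell|)^{2\alpha}\big)$. The space $F_d(r_{\alpha,\boldsymbol{\beta}})$ consists of all $f\in L_2([0,1]^d)$ (complex valued) with $\|f\|^2:=\sum_{\mathbf{k}\in\mathbb{Z}^d}|\hat f(\mathbf{k})|^2 r_{\alpha,\boldsymbol{\beta}}(\mathbf{k})<\infty$, where $\hat f(\mathbf{k})=\int_{[0,1]^d}f(\mathbf{x})e^{-2\pi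 i\mathbf{k}\cdot\mathbf{x}}\,d\mathbf{x}$. Permutation invariance. For $I_d\subseteq\{1,\ldots,d\}$ let $\mathcal{S}_d$ be the set of bijections $P$ of $\{1,\ldots,d\}$ with $P(j)=j$ for all $j\notin I_d$, and write $P(\mathbf{x}):=(x_{P(1)},\ldots,x_{P(d)})$. The subspace $\mathfrak{S}_{I_d}(F_d(r_{\alpha,\boldsymbol{\beta}}))$ consists of all $f\in F_d(r_{\alpha,\boldsymbol{\beta}})$ with $f(\mathbf{x})=f(P(\mathbf{x}))$ for all $\mathbf{x}\in[0,1]^d$, $P\in\mathcal{S}_d$, with the same norm. For nonempty $\mathfrak{u}\subseteq\{1,\ldots,d\}$ let $\mathcal{S}_{\mathfrak{u},I_d}$ be the set of bijections $P$ of $\mathfrak{u}$ with $P(j)=j$ for $j\in\mathfrak{u}\setminus I_d$, and for $\mathbf{h}_{\mathfrak{u}}\in\mathbb{Z}^{\mathfrak{u}}$ let $\mathbb{M}_{\mathfrak{u},I_d}(\mathbf{h}_{\mathfrak{u}})!:=\#\{P\in\mathcal{S}_{\mathfrak{u},I_d}: P(\mathbf{h}_{\mathfrak{u}})=\mathbf{h}_{\mathfrak{u}}\}$; $\mathbb{M}_d(\mathbf{h})!$ denotes this quantity for $\mathfrak{u}=\{1,\ldots,d\}$. For $\mathbf{h}\in\mathbb{Z}^d$ (or $\mathbf{z}$), $\mathbf{h}_{\mathfrak{u}}=(h_j)_{j\in\mathfrak{u}}$ denotes the restriction. Lattice rules. $\mathbb{Z}_n:=\{0,\ldots,n-1\}$.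 For prime $n$ and $\mathbf{z}\in\mathbb{Z}_n^d$, the shifted rank-1 lattice rule $Q_{d,n}(\mathbf{z})+\boldsymbol{\Delta}$, $\boldsymbol{\Delta}\in[0,1)^d$, is $f\mapsto\frac1n\sum_{j=0}^{n-1}f(\{j\mathbf{z}/n+\boldsymbol{\Delta}\})$, with $\{\cdot\}$ the componentwise fractional part. For nonempty $\mathfrak{u}$, $L(\mathbf{z}_{\mathfrak{u}},n)^\perp:=\{\mathbf{h}_{\mathfrak{u}}\in\mathbb{Z}^{\mathfrak{u}}:\mathbf{h}_{\mathfrak{u}}\cdot\mathbf{z}_{\mathfrak{u}}\equiv 0\pmod n\}$. The worst case error of a cubature rule $Q$ on a normed function space $H$ is $e^{\mathrm{wor}}(Q;H):=\sup_{\|f\|_H\le1}|\int_{[0,1]^d}f-Q(f)|$. *)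

theory Defs
  imports "HOL-Analysis.Analysis" "HOL-Combinatorics.Permutations"
    "HOL-Computational_Algebra.Primes"
begin

text \<open>Vectors in Z^u, [0,1]^d etc. are extensional functions on nat, indexed by the
  coordinate set u (for dimension d: u = {1..d}).\<close>

definition ZZ :: "nat set \<Rightarrow> (nat \<Rightarrow> int) set" where
  "ZZ u = PiE u (\<lambda>_. UNIV)"

definition rfun :: "(real \<Rightarrow> real) \<Rightarrow> real \<Rightarrow> real \<Rightarrow> real \<Rightarrow> nat set \<Rightarrow> (nat \<Rightarrow> int) \<Rightarrow> real" where
  "rfun R \<alpha> \<beta>0 \<beta>1 u k =
     (\<Prod>l\<in>u. if k l = 0 then 1 / \<beta>0 else R (real_of_int \<bar>k l\<bar>) powr (2 * \<alpha>) / \<beta>1)"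

definition cube :: "nat \<Rightarrow> (nat \<Rightarrow> real) set" where
  "cube d = PiE {1..d} (\<lambda>_. {0..1})"

definition cube_measure :: "nat \<Rightarrow> (nat \<Rightarrow> real) measure" where
  "cube_measure d = PiM {1..d} (\<lambda>_. lebesgue_on {0..1})"

definition dotp :: "nat \<Rightarrow> (nat \<Rightarrow> int) \<Rightarrow> (nat \<Rightarrow> real) \<Rightarrow> real" where
  "dotp d k x = (\<Sum>j\<in>{1..d}. real_of_int (k j) * x j)"

definition fourier_coeff :: "nat \<Rightarrow> ((nat \<Rightarrow> real) \<Rightarrow> complex) \<Rightarrow> (nat \<Rightarrow> int) \<Rightarrow> complex" where
  "fourier_coeff d f k = (LINT x|cube_measure d. f x * cis (- 2 * pi * dotp d k x))"

definition Fnorm2 :: "(real \<Rightarrow> real) \<Rightarrow> real \<Rightarrow> real \<Rightarrow> real \<Rightarrow> nat \<Rightarrow> ((nat \<Rightarrow> real) \<Rightarrow> complex) \<Rightarrow> real" where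
  "Fnorm2 R \<alpha> \<beta>0 \<beta>1 d f =
     (\<Sum>\<^sub>\<infinity>k\<in>ZZ {1..d}. (cmod (fourier_coeff d f k))\<^sup>2 * rfun R \<alpha> \<beta>0 \<beta>1 {1..d} k)"

definition Fnorm :: "(real \<Rightarrow> real) \<Rightarrow> real \<Rightarrow> real \<Rightarrow> real \<Rightarrow> nat \<Rightarrow> ((nat \<Rightarrow> real) \<Rightarrow> complex) \<Rightarrow> real" where
  "Fnorm R \<alpha> \<beta>0 \<beta>1 d f = sqrt (Fnorm2 R \<alpha> \<beta>0 \<beta>1 d f)"

text \<open>Functions are identified with their (absolutely
  convergent) Fourier series on the cube, i.e. the continuous representative is used,
  so that point evaluation (cubature) is meaningful.\<close>
definition Fspace :: "(real \<Rightarrow> real) \<Rightarrow> real \<Rightarrow> real \<Rightarrow> real \<Rightarrow> nat \<Rightarrow> ((nat \<Rightarrow> real) \<Rightarrow> complex) set" where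
  "Fspace R \<alpha> \<beta>0 \<beta>1 d = {f.
      f \<in> borel_measurable (cube_measure d) \<and>
      integrable (cube_measure d) (\<lambda>x. (cmod (f x))\<^sup>2) \<and>
      (\<lambda>k. (cmod (fourier_coeff d f k))\<^sup>2 * rfun R \<alpha> \<beta>0 \<beta>1 {1..d} k) summable_on ZZ {1..d} \<and>
      (\<forall>x\<in>cube d. f x = (\<Sum>\<^sub>\<infinity>k\<in>ZZ {1..d}. fourier_coeff d f k * cis (2 * pi * dotp d k x)))}"

text \<open>S_{u,I_d}: bijections of u fixing u - I_d (as functions on nat fixing everything else)\<close>
definition Sset :: "nat set \<Rightarrow> nat set \<Rightarrow> (nat \<Rightarrow> nat) set" where
  "Sset u I = {P. P permutes (u \<inter> I)}"

definition Mfact :: "nat set \<Rightarrow> nat set \<Rightarrow> (nat \<Rightarrow> int) \<Rightarrow> nat" where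
  "Mfact u I h = card {P \<in> Sset u I. \<forall>j\<in>u. h (P j) = h j}"

definition SymSpace :: "(real \<Rightarrow> real) \<Rightarrow> real \<Rightarrow> real \<Rightarrow> real \<Rightarrow> nat \<Rightarrow> nat set \<Rightarrow> ((nat \<Rightarrow> real) \<Rightarrow> complex) set" where
  "SymSpace R \<alpha> \<beta>0 \<beta>1 d I = {f \<in> Fspace R \<alpha> \<beta>0 \<beta>1 d.
      \<forall>x\<in>cube d. \<forall>P\<in>Sset {1..d} I. f x = f (\<lambda>j. x (P j))}"

definition lattice_rule :: "nat \<Rightarrow> nat \<Rightarrow> (nat \<Rightarrow> int) \<Rightarrow> (nat \<Rightarrow> real) \<Rightarrow> ((nat \<Rightarrow> real) \<Rightarrow> complex) \<Rightarrow> complex" where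
  "lattice_rule d n z \<Delta> f = of_real (1 / real n) *
     (\<Sum>j<n. f (\<lambda>i. if i \<in> {1..d} then frac (real j * real_of_int (z i) / real n + \<Delta> i) else undefined))"

definition wce :: "((nat \<Rightarrow> real) \<Rightarrow> complex) set \<Rightarrow> (((nat \<Rightarrow> real) \<Rightarrow> complex) \<Rightarrow> real)
     \<Rightarrow> (((nat \<Rightarrow> real) \<Rightarrow> complex) \<Rightarrow> complex) \<Rightarrow> (((nat \<Rightarrow> real) \<Rightarrow> complex) \<Rightarrow> complex) \<Rightarrow> ereal" where
  "wce H nrm Iexact Q = (SUP f\<in>{f\<in>H. nrm f \<le> 1}. ereal (cmod (Iexact f - Q f)))"

definition cfac :: "real \<Rightarrow> nat set \<Rightarrow> nat set \<Rightarrow> real" where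
  "cfac \<beta>0 I u = \<beta>0 ^ card u * real (card I choose card (I \<inter> u))"

definition Bfun :: "(real \<Rightarrow> real) \<Rightarrow> real \<Rightarrow> real \<Rightarrow> real \<Rightarrow> nat set \<Rightarrow> nat \<Rightarrow> nat \<Rightarrow> (nat \<Rightarrow> int) \<Rightarrow> real" where
  "Bfun R \<alpha> \<beta>0 \<beta>1 I n l z =
     (\<Sum>u\<in>{u. u \<subseteq> {1..l} \<and> l \<in> u}. (1 / cfac \<beta>0 I u) *
        (\<Sum>\<^sub>\<infinity>h\<in>PiE u (\<lambda>_. - {0}).
           real (Mfact u I h) / real (card (Sset u I)) * (1 / rfun R \<alpha> \<beta>0 \<beta>1 u h) *
           (if (\<Sum>j\<in>u. h j * z j) mod int n = 0 then 1 else 0)))"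

definition Cdl :: "(real \<Rightarrow> real) \<Rightarrow> real \<Rightarrow> real \<Rightarrow> real \<Rightarrow> nat \<Rightarrow> nat set \<Rightarrow> real \<Rightarrow> real" where
  "Cdl R \<alpha> \<beta>0 \<beta>1 d I lam =
     (\<Sum>\<^sub>\<infinity>h\<in>ZZ {1..d} - {restrict (\<lambda>_. 0) {1..d}}.
        (real (Mfact {1..d} I h) / real (card (Sset {1..d} I)) / rfun R \<alpha> \<beta>0 \<beta>1 {1..d} h)
          powr (1 / lam)) powr lam"

end

theory Submission
  imports Defs
begin

lemma summable_on_divide_const:
  fixes f :: "'a \<Rightarrow> real"
  shows "f summable_on A \<Longrightarrow> (\<lambda>x. f x / c) summable_on A"
  by (simp add: divide_inverse summable_on_cmult_left)

lemma infsum_divide_const: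
  fixes f :: "'a \<Rightarrow> real"
  shows "infsum (\<lambda>x. f x / c) A = infsum f A / c"
  by (simp add: divide_inverse infsum_cmult_left')

lemma prod_PiE_summable_nonneg:
  fixes w :: "'a \<Rightarrow> 'b \<Rightarrow> real"
  assumes A: "finite A" and nn: "\<And>x y. x \<in> A \<Longrightarrow> 0 \<le> w x y"
    and sm: "\<And>x. x \<in> A \<Longrightarrow> w x summable_on B x"
  shows "(\<lambda>g. \<Prod>x\<in>A. w x (g x)) summable_on PiE A B"
proof (rule nonneg_bdd_above_summable_on)
  show "\<And>g. g \<in> PiE A B \<Longrightarrow> 0 \<le> (\<Prod>x\<in>A. w x (g x))" using nn by (simp add: prod_nonneg)
  show "bdd_above (sum (\<lambda>g. \<Prod>x\<in>A. w x (g x)) ` {F. F \<subseteq> PiE A B \<and> finite F})"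
  proof (rule bdd_aboveI2)
    fix F assume "F \<in> {F. F \<subseteq> PiE A B \<and> finite F}"
    hence F: "F \<subseteq> PiE A B" "finite F" by auto
    define C where "C x = (\<lambda>g. g x) ` F" for x
    have FC: "F \<subseteq> PiE A C" using F by (auto simp: C_def PiE_def Pi_def)
    have CB: "C x \<subseteq> B x" if "x \<in> A" for x using F that by (auto simp: C_def PiE_def Pi_def)
    have finC: "finite (C x)" for x using F by (simp add: C_def)
    have "sum (\<lambda>g. \<Prod>x\<in>A. w x (g x)) F \<le> sum (\<lambda>g. \<Prod>x\<in>A. w x (g x)) (PiE A C)"
      by (rule sum_mono2) (use FC A finC nn in \<open>auto intro!: finite_PiE prod_nonneg\<close>)
    also have "\<dots> = (\<Prod>x\<in>A. \<Sum>y\<in>C x. w x y)" by (rule prod_sum_PiE[symmetric]) (use A finC in auto)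
    also have "\<dots> \<le> (\<Prod>x\<in>A. infsum (w x) (B x))"
    proof (rule prod_mono)
      fix x assume x: "x \<in> A"
      have "0 \<le> sum (w x) (C x)" using nn x by (auto intro: sum_nonneg)
      moreover have "sum (w x) (C x) \<le> infsum (w x) (B x)"
        by (rule finite_sum_le_infsum) (use sm x CB[OF x] finC nn in auto)
      ultimately show "0 \<le> sum (w x) (C x) \<and> sum (w x) (C x) \<le> infsum (w x) (B x)" by simp
    qed
    finally show "sum (\<lambda>g. \<Prod>x\<in>A. w x (g x)) F \<le> (\<Prod>x\<in>A. infsum (w x) (B x))" .
  qed
qed

lemma prod_PiE_infsum_nonneg:
  fixes w :: "'a \<Rightarrow> 'b \<Rightarrow> real"
  assumes A: "finite A" and nn: "\<And>x y. x \<in> A \<Longrightarrow> 0 \<le> w x y"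
    and sm: "\<And>x. x \<in> A \<Longrightarrow> w x summable_on B x"
  shows "infsum (\<lambda>g. \<Prod>x\<in>A. w x (g x)) (PiE A B) = (\<Prod>x\<in>A. infsum (w x) (B x))"
  by (rule infsum_prod_PiE) (use assms prod_PiE_summable_nonneg[OF assms] in auto)

lemma infsum_powr_le:
  fixes a :: "'a \<Rightarrow> real"
  assumes p: "0 < p" "p \<le> 1" and nn: "\<And>x. x \<in> A \<Longrightarrow> 0 \<le> a x"
    and sa: "a summable_on A" and sp: "(\<lambda>x. a x powr p) summable_on A"
  shows "(infsum a A) powr p \<le> infsum (\<lambda>x. a x powr p) A"
proof -
  define T where "T = infsum (\<lambda>x. a x powr p) A"
  have T0: "0 \<le> T" unfolding T_def by (rule infsum_nonneg) auto
  have single: "a x powr p \<le> T" if "x \<in> A" for x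
  proof -
    have "sum (\<lambda>x. a x powr p) {x} \<le> T" unfolding T_def
      by (rule finite_sum_le_infsum) (use sp that in auto)
    thus ?thesis by simp
  qed
  show ?thesis
  proof (cases "T = 0")
    case True
    hence "a x = 0" if "x \<in> A" for x using single[OF that] nn[OF that]
      by (metis order.antisym powr_ge_zero powr_eq_0_iff)
    hence "infsum a A = 0" by (simp add: infsum_0)
    thus ?thesis using T0 True T_def by simp
  next
    case False
    hence Tp: "T > 0" using T0 by simp
    define c where "c = T powr (1/p)"
    have cp: "c > 0" using Tp by (simp add: c_def)
    have cpp: "c powr p = T" using Tp p by (simp add: c_def powr_powr)
    have le_c: "a x \<le> c" if "x \<in> A" for x
    proof -
      have "a x = (a x powr p) powr (1/p)" using nn[OF that] p by (simp add: powr_powr)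
      also have "\<dots> \<le> T powr (1/p)" using single[OF that] p by (intro powr_mono2) auto
      finally show ?thesis by (simp add: c_def)
    qed
    have "infsum (\<lambda>x. a x / c) A \<le> infsum (\<lambda>x. (a x / c) powr p) A"
    proof (rule infsum_mono)
      show "(\<lambda>x. a x / c) summable_on A" using sa by (simp add: summable_on_divide_const)
      show "(\<lambda>x. (a x / c) powr p) summable_on A"
        using sp cp nn by (simp add: powr_divide summable_on_divide_const)
      fix x assume x: "x \<in> A"
      have "a x / c = (a x / c) powr 1" using nn[OF x] cp by simp
      also have "\<dots> \<le> (a x / c) powr p"
        by (rule powr_mono') (use p nn[OF x] cp le_c[OF x] in auto)
      finally show "a x / c \<le> (a x / c) powr p" .
    qed
    also have "infsum (\<lambda>x. (a x / c) powr p) A = infsum (\<lambda>x. a x powr p) A / c powr p"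
      using nn cp by (subst infsum_cong[where g="\<lambda>x. a x powr p / c powr p"])
         (auto simp: powr_divide infsum_divide_const)
    also have "\<dots> = 1" using cpp Tp T_def by simp
    finally have "infsum a A / c \<le> 1" by (simp add: infsum_divide_const)
    hence "infsum a A \<le> c" using cp by (simp add: divide_le_eq)
    moreover have "0 \<le> infsum a A" by (rule infsum_nonneg) (use nn in auto)
    ultimately have "(infsum a A) powr p \<le> c powr p" using p by (intro powr_mono2) auto
    thus ?thesis using cpp T_def by simp
  qed
qed

lemma sum_powr_le:
  fixes a :: "'a \<Rightarrow> real"
  assumes p: "0 < p" "p \<le> 1" and nn: "\<And>x. x \<in> A \<Longrightarrow> 0 \<le> a x" and A: "finite A"
  shows "(sum a A) powr p \<le> sum (\<lambda>x. a x powr p) A"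
proof -
  have "infsum a A powr p \<le> infsum (\<lambda>x. a x powr p) A"
    by (rule infsum_powr_le[OF p]) (use nn A in auto)
  thus ?thesis using A by simp
qed


lemma summable_on_finite_sum:
  fixes f :: "'i \<Rightarrow> 'a \<Rightarrow> 'b::{topological_comm_monoid_add}"
  assumes "finite I" "\<And>i. i \<in> I \<Longrightarrow> f i summable_on A"
  shows "(\<lambda>x. \<Sum>i\<in>I. f i x) summable_on A"
  using assms by (induction I rule: finite_induct) (auto intro!: summable_on_add)

lemma infsum_finite_sum:
  fixes f :: "'i \<Rightarrow> 'a \<Rightarrow> 'b::{topological_comm_monoid_add, t2_space}"
  assumes "finite I" "\<And>i. i \<in> I \<Longrightarrow> f i summable_on A"
  shows "infsum (\<lambda>x. \<Sum>i\<in>I. f i x) A = (\<Sum>i\<in>I. infsum (f i) A)"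
  using assms
proof (induction I rule: finite_induct)
  case (insert i I)
  have "infsum (\<lambda>x. \<Sum>i\<in>insert i I. f i x) A = infsum (\<lambda>x. f i x + (\<Sum>i\<in>I. f i x)) A"
    using insert by simp
  also have "\<dots> = infsum (f i) A + infsum (\<lambda>x. \<Sum>i\<in>I. f i x) A"
    by (rule infsum_add) (use insert in \<open>auto intro!: summable_on_finite_sum\<close>)
  finally show ?case using insert by simp
qed simp

lemma int_summable_from_nat:
  fixes g :: "nat \<Rightarrow> real"
  assumes nn: "\<And>m. 0 \<le> g m" and sm: "summable (\<lambda>m. g (Suc m))"
  shows "(\<lambda>k::int. g (nat \<bar>k\<bar>)) summable_on (- {0})"
proof -
  have eq: "- {0::int} = (\<lambda>m. int (Suc m)) ` UNIV \<union> (\<lambda>m. - int (Suc m)) ` UNIV"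
  proof (intro equalityI subsetI)
    fix x :: int assume "x \<in> - {0}"
    hence x: "x \<noteq> 0" by simp
    show "x \<in> (\<lambda>m. int (Suc m)) ` UNIV \<union> (\<lambda>m. - int (Suc m)) ` UNIV"
    proof (cases "x > 0")
      case True
      hence "x = int (Suc (nat x - 1))" by simp
      thus ?thesis by blast
    next
      case False
      hence "x = - int (Suc (nat (- x) - 1))" using x by simp
      thus ?thesis by blast
    qed
  qed auto
  have eq1: "((\<lambda>k::int. g (nat \<bar>k\<bar>)) \<circ> (\<lambda>m. int (Suc m))) = (\<lambda>m. g (Suc m))"
    by (auto simp: fun_eq_iff simp del: of_nat_Suc)
  have s1: "(\<lambda>k::int. g (nat \<bar>k\<bar>)) summable_on (\<lambda>m. int (Suc m)) ` UNIV"
    by (subst summable_on_reindex) (use nn sm in \<open>auto simp: inj_on_def eq1 summable_on_UNIV_nonneg_real_iff simp del: of_nat_Suc\<close>)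
  have eq2: "((\<lambda>k::int. g (nat \<bar>k\<bar>)) \<circ> (\<lambda>m. - int (Suc m))) = (\<lambda>m. g (Suc m))"
    by (auto simp: fun_eq_iff nat_add_distrib)
  have s2: "(\<lambda>k::int. g (nat \<bar>k\<bar>)) summable_on (\<lambda>m. - int (Suc m)) ` UNIV"
    by (subst summable_on_reindex) (use nn sm in \<open>auto simp: inj_on_def eq2 summable_on_UNIV_nonneg_real_iff simp del: of_nat_Suc\<close>)
  show ?thesis unfolding eq by (rule summable_on_union[OF s1 s2])
qed

locale setting =
  fixes R :: "real \<Rightarrow> real" and cR \<alpha> \<beta>0 \<beta>1 :: real and d n :: nat
    and I :: "nat set" and z :: "nat \<Rightarrow> int"
  assumes R_pos: "\<forall>x\<ge>1. R x > 0"
    and cR: "cR \<ge> 1"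
    and R_scale: "\<forall>k m :: nat. k \<ge> 1 \<longrightarrow> m \<ge> 1 \<longrightarrow>
        R (real m) / cR \<le> R (real (k * m)) / real k \<and> R (real (k * m)) / real k \<le> R (real m)"
    and alpha: "\<alpha> \<ge> 0"
    and muR: "summable (\<lambda>m. R (real (Suc m)) powr (- 2 * \<alpha>))"
    and beta: "\<beta>0 > 0" "\<beta>1 > 0"
    and d: "d \<ge> 1"
    and I: "I \<subseteq> {1..d}"
    and n: "prime n" "real n \<ge> cR"
    and z1: "z 1 \<in> {1..int n - 1}"
    and zCBC: "\<forall>l\<in>{2..d}. z l \<in> {0..<int n} \<and>
        (\<forall>w\<in>{0..<int n}. Bfun R \<alpha> \<beta>0 \<beta>1 I n l z \<le> Bfun R \<alpha> \<beta>0 \<beta>1 I n l (z(l := w)))"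
begin

definition wt :: "int \<Rightarrow> real" where
  "wt k = (if k = 0 then \<beta>0 else \<beta>1 * R (real_of_int \<bar>k\<bar>) powr (- 2 * \<alpha>))"

lemma R_pos_int: "k \<noteq> 0 \<Longrightarrow> R (real_of_int \<bar>k\<bar>) > 0"
  using R_pos by simp

lemma wt_pos: "wt k > 0"
proof (cases "k = 0")
  case False
  hence "R (real_of_int \<bar>k\<bar>) powr (- 2 * \<alpha>) > 0" using R_pos_int[of k] by simp
  thus ?thesis using beta False by (simp add: wt_def)
qed (use beta in \<open>simp add: wt_def\<close>)

lemma rfun_pos: "rfun R \<alpha> \<beta>0 \<beta>1 u h > 0"
  unfolding rfun_def
proof (intro prod_pos)
  fix l assume "l \<in> u"
  show "0 < (if h l = 0 then 1 / \<beta>0 else R (real_of_int \<bar>h l\<bar>) powr (2 * \<alpha>) / \<beta>1)"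
  proof (cases "h l = 0")
    case False
    hence "R (real_of_int \<bar>h l\<bar>) powr (2 * \<alpha>) > 0" using R_pos_int[of "h l"] by simp
    thus ?thesis using beta False by simp
  qed (use beta in simp)
qed

lemma inv_rfun: "1 / rfun R \<alpha> \<beta>0 \<beta>1 u h = (\<Prod>l\<in>u. wt (h l))"
proof -
  have "1 / rfun R \<alpha> \<beta>0 \<beta>1 u h = (\<Prod>l\<in>u. 1 / (if h l = 0 then 1 / \<beta>0 else R (real_of_int \<bar>h l\<bar>) powr (2 * \<alpha>) / \<beta>1))"
    unfolding rfun_def by (simp add: prod_dividef)
  also have "\<dots> = (\<Prod>l\<in>u. wt (h l))"
    by (rule prod.cong) (use R_pos_int in \<open>auto simp: wt_def powr_minus divide_simps\<close>)
  finally show ?thesis .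
qed

lemma R_lower: "m \<ge> 1 \<Longrightarrow> real m * R 1 / cR \<le> R (real m)"
  using R_scale[rule_format, of m 1] cR by (auto simp: field_simps)

lemma R1_pos: "R 1 > 0" using R_pos by simp

lemma wt_summable: "wt summable_on UNIV"
proof -
  have "(\<lambda>k::int. (\<lambda>m. \<beta>1 * R (real m) powr (- 2 * \<alpha>)) (nat \<bar>k\<bar>)) summable_on (- {0})"
    by (rule int_summable_from_nat) (use beta muR in \<open>auto intro: summable_mult\<close>)
  hence "wt summable_on (- {0})"
    by (rule summable_on_cong[THEN iffD1, rotated]) (auto simp: wt_def)
  hence "wt summable_on insert 0 (- {0})" by (simp add: summable_on_insert_iff)
  moreover have "insert 0 (- {0::int}) = UNIV" by auto
  ultimately show ?thesis by simp
qed

lemma wt_powr_summable: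
  assumes q: "q > 0" "2 * \<alpha> * q > 1"
  shows "(\<lambda>k. wt k powr q) summable_on UNIV"
proof -
  define s where "s = 2 * \<alpha> * q"
  have s: "s > 1" using q by (simp add: s_def)
  have sm: "summable (\<lambda>m. \<beta>1 powr q * R (real (Suc m)) powr (- s))"
  proof (rule summable_mult, rule summable_comparison_test)
    show "summable (\<lambda>m. (R 1 / cR) powr (- s) * real (Suc m) powr (- s))"
      using s summable_real_powr_iff[of "-s"] summable_Suc_iff[of "\<lambda>m. real m powr (-s)"]
      by (intro summable_mult) simp
    show "\<exists>N. \<forall>m\<ge>N. norm (R (real (Suc m)) powr - s) \<le> (R 1 / cR) powr - s * real (Suc m) powr - s"
    proof (intro exI allI impI)
      fix m :: nat
      have pos: "real (Suc m) * R 1 / cR > 0" using R1_pos cR by simp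
      have "R (real (Suc m)) powr - s \<le> (real (Suc m) * R 1 / cR) powr - s"
        using R_lower[of "Suc m"] pos s by (intro powr_mono2') auto
      also have "\<dots> = (R 1 / cR) powr (- s) * real (Suc m) powr (- s)"
        using R1_pos cR by (simp add: powr_mult[symmetric] mult_ac)
      finally show "norm (R (real (Suc m)) powr - s) \<le> (R 1 / cR) powr - s * real (Suc m) powr - s"
        by simp
    qed
  qed
  have "(\<lambda>k::int. (\<lambda>m. \<beta>1 powr q * R (real m) powr (- s)) (nat \<bar>k\<bar>)) summable_on (- {0})"
    by (rule int_summable_from_nat) (use sm in auto)
  hence "(\<lambda>k. wt k powr q) summable_on (- {0})"
  proof (rule summable_on_cong[THEN iffD1, rotated])
    fix k :: int assume "k \<in> - {0}"
    hence k: "k \<noteq> 0" by simp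
    have "wt k powr q = \<beta>1 powr q * (R (real_of_int \<bar>k\<bar>) powr (- 2 * \<alpha>)) powr q"
      using k beta R_pos_int[OF k] by (simp add: wt_def powr_mult)
    also have "\<dots> = \<beta>1 powr q * R (real (nat \<bar>k\<bar>)) powr (- s)"
      using R_pos_int[OF k] by (simp add: powr_powr s_def)
    finally show "\<beta>1 powr q * R (real (nat \<bar>k\<bar>)) powr - s = wt k powr q" by simp
  qed
  hence "(\<lambda>k. wt k powr q) summable_on insert 0 (- {0})" by (simp add: summable_on_insert_iff)
  moreover have "insert 0 (- {0::int}) = UNIV" by auto
  ultimately show ?thesis by simp
qed

lemma inv_rfun_summable:
  assumes "finite u"
  shows "(\<lambda>h. 1 / rfun R \<alpha> \<beta>0 \<beta>1 u h) summable_on PiE u B"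
  unfolding inv_rfun
  by (rule prod_PiE_summable_nonneg)
     (use assms wt_pos wt_summable in \<open>auto intro: less_imp_le summable_on_subset\<close>)

lemma inv_rfun_powr_summable:
  assumes "finite u" "q > 0" "2 * \<alpha> * q > 1"
  shows "(\<lambda>h. (1 / rfun R \<alpha> \<beta>0 \<beta>1 u h) powr q) summable_on PiE u B"
  unfolding inv_rfun prod_powr_distrib
  by (rule prod_PiE_summable_nonneg)
     (use assms wt_pos wt_powr_summable in \<open>auto intro: less_imp_le summable_on_subset\<close>)

end

lemma permutes_maps: "P permutes S \<Longrightarrow> x \<in> S \<Longrightarrow> P x \<in> S"
  by (simp add: permutes_in_image)

lemma permutes_restrict_sub:
  assumes P: "P permutes S" and fin: "finite S" and T: "T \<subseteq> S" and PT: "\<And>x. x \<in> T \<Longrightarrow> P x \<in> T"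
  shows "(\<lambda>j. if j \<in> T then P j else j) permutes T"
proof (rule bij_imp_permutes)
  have inj: "inj_on P T" using P T by (meson inj_on_subset permutes_inj_on)
  have "P ` T = T" by (rule endo_inj_surj) (use fin T PT inj in \<open>auto intro: finite_subset\<close>)
  hence "bij_betw P T T" using inj by (simp add: bij_betw_def)
  thus "bij_betw (\<lambda>j. if j \<in> T then P j else j) T T"
    by (rule bij_betw_cong[THEN iffD1, rotated]) auto
qed auto

lemma stab_decomp:
  fixes g :: "nat \<Rightarrow> int"
  assumes finD: "finite D" and uD: "u \<subseteq> D" and ID: "I \<subseteq> D"
    and gu: "\<And>j. j \<in> u \<Longrightarrow> g j \<noteq> 0" and gD: "\<And>j. j \<in> D - u \<Longrightarrow> g j = 0"
  shows "card {P. P permutes I \<and> (\<forall>j\<in>D. g (P j) = g j)}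
       = card {P. P permutes (u \<inter> I) \<and> (\<forall>j\<in>u. g (P j) = g j)} * fact (card (I - u))"
proof -
  define A where "A = {P. P permutes (u \<inter> I) \<and> (\<forall>j\<in>u. g (P j) = g j)}"
  define B where "B = {Q. Q permutes (I - u)}"
  define C where "C = {P. P permutes I \<and> (\<forall>j\<in>D. g (P j) = g j)}"
  have finI: "finite I" using finD ID finite_subset by blast
  have "bij_betw (\<lambda>(P1, Q). P1 \<circ> Q) (A \<times> B) C"
  proof (rule bij_betwI')
    fix x y assume x: "x \<in> A \<times> B" and y: "y \<in> A \<times> B"
    obtain P1 Q where xe: "x = (P1, Q)" by (cases x)
    obtain P1' Q' where ye: "y = (P1', Q')" by (cases y)
    have P1: "P1 permutes (u \<inter> I)" and Q: "Q permutes (I - u)" using x xe by (auto simp: A_def B_def)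
    have P1': "P1' permutes (u \<inter> I)" and Q': "Q' permutes (I - u)" using y ye by (auto simp: A_def B_def)
    show "((\<lambda>(P1, Q). P1 \<circ> Q) x = (\<lambda>(P1, Q). P1 \<circ> Q) y) = (x = y)"
    proof
      assume eq: "(\<lambda>(P1, Q). P1 \<circ> Q) x = (\<lambda>(P1, Q). P1 \<circ> Q) y"
      hence eq': "P1 (Q j) = P1' (Q' j)" for j using xe ye by (auto simp: fun_eq_iff)
      have "P1 = P1'"
      proof
        fix j show "P1 j = P1' j"
        proof (cases "j \<in> u \<inter> I")
          case True
          hence "Q j = j" "Q' j = j" using Q Q' by (auto simp: permutes_not_in)
          thus ?thesis using eq'[of j] by simp
        next
          case False
          thus ?thesis using P1 P1' by (simp add: permutes_not_in)
        qed
      qed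
      moreover have "Q = Q'"
      proof
        fix j show "Q j = Q' j"
        proof (cases "j \<in> I - u")
          case True
          hence "Q j \<in> I - u" "Q' j \<in> I - u" using permutes_maps[OF Q] permutes_maps[OF Q'] by auto
          hence "P1 (Q j) = Q j" "P1' (Q' j) = Q' j" using P1 P1' by (auto simp: permutes_not_in)
          thus ?thesis using eq'[of j] by simp
        next
          case False
          thus ?thesis using Q Q' by (simp add: permutes_not_in)
        qed
      qed
      ultimately show "x = y" using xe ye by simp
    qed simp
  next
    fix x assume x: "x \<in> A \<times> B"
    obtain P1 Q where xe: "x = (P1, Q)" by (cases x)
    have P1: "P1 permutes (u \<inter> I)" and P1g: "\<forall>j\<in>u. g (P1 j) = g j"
      and Q: "Q permutes (I - u)" using x xe by (auto simp: A_def B_def)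
    have "P1 \<circ> Q permutes I"
      by (rule permutes_compose) (use Q P1 in \<open>auto intro: permutes_subset\<close>)
    moreover have "g (P1 (Q j)) = g j" if j: "j \<in> D" for j
    proof (cases "j \<in> u")
      case True
      hence "Q j = j" using Q by (auto simp: permutes_not_in)
      thus ?thesis using P1g True by simp
    next
      case False
      have Qj: "Q j \<notin> u \<and> Q j \<in> D"
      proof (cases "j \<in> I - u")
        case True
        thus ?thesis using Q ID by (auto dest: permutes_in_image[THEN iffD2])
      next
        case False
        thus ?thesis using Q \<open>j \<notin> u\<close> j by (simp add: permutes_not_in)
      qed
      hence "P1 (Q j) = Q j" using P1 by (simp add: permutes_not_in)
      thus ?thesis using Qj gD False j by simp
    qed
    ultimately show "(\<lambda>(P1, Q). P1 \<circ> Q) x \<in> C" using xe by (auto simp: C_def)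
  next
    fix P assume "P \<in> C"
    hence P: "P permutes I" and Pg: "\<forall>j\<in>D. g (P j) = g j" by (auto simp: C_def)
    have Pin: "P j \<in> I" if "j \<in> I" for j using P that by (simp add: permutes_in_image)
    have PIu: "P j \<in> u \<inter> I" if "j \<in> u \<inter> I" for j
      using that Pg gu gD Pin ID uD by (metis DiffI IntD1 IntD2 IntI subsetD)
    have PIu2: "P j \<in> I - u" if "j \<in> I - u" for j
      using that Pg gu gD Pin ID by (metis Diff_iff subsetD)
    define P1 where "P1 = (\<lambda>j. if j \<in> u \<inter> I then P j else j)"
    define Q where "Q = (\<lambda>j. if j \<in> I - u then P j else j)"
    have "P1 permutes (u \<inter> I)" unfolding P1_def
      by (rule permutes_restrict_sub[OF P finI]) (use PIu in auto)
    moreover have "\<forall>j\<in>u. g (P1 j) = g j" using Pg uD by (auto simp: P1_def)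
    moreover have "Q permutes (I - u)" unfolding Q_def
      by (rule permutes_restrict_sub[OF P finI]) (use PIu2 in auto)
    moreover have "P = P1 \<circ> Q"
    proof
      fix j show "P j = (P1 \<circ> Q) j"
      proof (cases "j \<in> I")
        case True
        show ?thesis
        proof (cases "j \<in> u")
          case True thus ?thesis using \<open>j \<in> I\<close> by (simp add: P1_def Q_def)
        next
          case False thus ?thesis using \<open>j \<in> I\<close> PIu2[of j] by (simp add: P1_def Q_def)
        qed
      next
        case False thus ?thesis using P by (simp add: P1_def Q_def permutes_not_in)
      qed
    qed
    ultimately show "\<exists>x\<in>A \<times> B. P = (\<lambda>(P1, Q). P1 \<circ> Q) x"
      by (auto simp: A_def B_def)
  qed
  hence "card C = card (A \<times> B)" by (simp add: bij_betw_same_card)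
  also have "\<dots> = card A * card B" by (simp add: card_cartesian_product)
  also have "card B = fact (card (I - u))" unfolding B_def
    by (rule card_permutations) (use finI in auto)
  finally show ?thesis by (simp add: A_def C_def)
qed

lemma Sset_finite: "finite u \<Longrightarrow> finite (Sset u I)"
  unfolding Sset_def by (rule finite_permutations) simp

lemma Sset_maps: "P \<in> Sset u I \<Longrightarrow> j \<in> u \<Longrightarrow> P j \<in> u"
  unfolding Sset_def by (metis IntD1 permutes_maps permutes_not_in mem_Collect_eq)

lemma Mfact_cong:
  assumes "\<And>j. j \<in> u \<Longrightarrow> h j = h' j"
  shows "Mfact u I h = Mfact u I h'"
  unfolding Mfact_def using assms Sset_maps by (intro arg_cong[where f=card]) (auto; metis)

lemma stab_change_le:
  fixes h :: "nat \<Rightarrow> int"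
  assumes u: "finite u" and finI: "finite I" and l: "l \<in> u"
  shows "Mfact u I (h(l := c)) \<le> max 1 (card I) * Mfact u I h"
proof -
  define h' where "h' = h(l := c)"
  define St' where "St' = {P \<in> Sset u I. \<forall>j\<in>u. h' (P j) = h' j}"
  define St where "St = {P \<in> Sset u I. \<forall>j\<in>u. h (P j) = h j}"
  define S0 where "S0 = {P \<in> St'. P l = l}"
  have finSt: "finite St" "finite St'" using Sset_finite[OF u] by (auto simp: St_def St'_def)
  have S0St: "S0 \<subseteq> St"
  proof
    fix P assume P: "P \<in> S0"
    hence PS: "P \<in> Sset u I" and Pl: "P l = l" and Ph: "\<forall>j\<in>u. h' (P j) = h' j"
      by (auto simp: S0_def St'_def)
    have inj: "inj P" using PS by (auto simp: Sset_def permutes_inj)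
    have "h (P j) = h j" if "j \<in> u" for j
    proof (cases "j = l")
      case False
      hence "P j \<noteq> l" using inj Pl by (metis injD)
      have "h' (P j) = h' j" using Ph that by blast
      thus ?thesis using \<open>P j \<noteq> l\<close> False by (simp add: h'_def)
    qed (use Pl in simp)
    thus "P \<in> St" using PS by (simp add: St_def)
  qed
  have cS0: "card S0 \<le> card St" by (rule card_mono[OF finSt(1) S0St])
  have "card St' \<le> max 1 (card I) * card S0"
  proof (cases "l \<in> I")
    case False
    hence "St' = S0" by (auto simp: St'_def S0_def Sset_def permutes_not_in)
    thus ?thesis by simp
  next
    case True
    define F where "F k = {P \<in> St'. P l = k}" for k
    have "St' \<subseteq> (\<Union>k\<in>u \<inter> I. F k)"
    proof
      fix P assume P: "P \<in> St'"
      hence "P permutes (u \<inter> I)" by (auto simp: St'_def Sset_def)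
      hence "P l \<in> u \<inter> I" using True l permutes_maps[of P "u \<inter> I" l] by simp
      thus "P \<in> (\<Union>k\<in>u \<inter> I. F k)" using P by (auto simp: F_def)
    qed
    moreover have "finite (\<Union>k\<in>u \<inter> I. F k)"
      by (rule finite_subset[OF _ finSt(2)]) (auto simp: F_def)
    ultimately have "card St' \<le> card (\<Union>k\<in>u \<inter> I. F k)"
      by (intro card_mono)
    also have "\<dots> \<le> (\<Sum>k\<in>u \<inter> I. card (F k))" by (rule card_UN_le) (use u in auto)
    also have "\<dots> \<le> (\<Sum>k\<in>u \<inter> I. card S0)"
    proof (rule sum_mono)
      fix k assume k: "k \<in> u \<inter> I"
      show "card (F k) \<le> card S0"
      proof (cases "F k = {}")
        case False
        then obtain P0 where P0: "P0 \<in> F k" by blast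
        hence P0S: "P0 permutes (u \<inter> I)" and P0h: "\<forall>j\<in>u. h' (P0 j) = h' j" and P0l: "P0 l = k"
          by (auto simp: F_def St'_def Sset_def)
        have "inj_on (\<lambda>P. inv P0 \<circ> P) (F k)"
        proof (rule inj_onI)
          fix P P' assume "inv P0 \<circ> P = inv P0 \<circ> P'"
          hence "P0 \<circ> (inv P0 \<circ> P) = P0 \<circ> (inv P0 \<circ> P')" by simp
          thus "P = P'" using permutes_inverses(1)[OF P0S] by (simp add: fun_eq_iff)
        qed
        moreover have "(\<lambda>P. inv P0 \<circ> P) ` F k \<subseteq> S0"
        proof
          fix Q assume "Q \<in> (\<lambda>P. inv P0 \<circ> P) ` F k"
          then obtain P where P: "P \<in> F k" and Qe: "Q = inv P0 \<circ> P" by blast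
          hence PS: "P permutes (u \<inter> I)" and Ph: "\<forall>j\<in>u. h' (P j) = h' j" and Pl: "P l = k"
            by (auto simp: F_def St'_def Sset_def)
          have QS: "Q permutes (u \<inter> I)" unfolding Qe
            by (rule permutes_compose[OF PS permutes_inv[OF P0S]])
          have "h' (Q j) = h' j" if j: "j \<in> u" for j
          proof -
            define y where "y = P j"
            have y: "y \<in> u" using PS j unfolding y_def by (metis IntE permutes_maps permutes_not_in)
            define x where "x = inv P0 y"
            have xy: "P0 x = y" unfolding x_def by (rule permutes_inverses(1)[OF P0S])
            have x: "x \<in> u" using permutes_inv[OF P0S] y unfolding x_def
              by (metis IntE permutes_maps permutes_not_in)
            have "h' (Q j) = h' x" by (simp add: Qe x_def y_def)
            also have "\<dots> = h' (P0 x)" using P0h x by simp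
            also have "\<dots> = h' j" using xy Ph j y_def by simp
            finally show ?thesis .
          qed
          moreover have "Q l = l" using Qe Pl P0l permutes_inverses(2)[OF P0S, of l] by simp
          ultimately show "Q \<in> S0" using QS by (auto simp: S0_def St'_def Sset_def)
        qed
        ultimately show ?thesis by (rule card_inj_on_le) (use finSt in \<open>auto simp: S0_def\<close>)
      qed simp
    qed
    also have "\<dots> = card (u \<inter> I) * card S0" by simp
    also have "\<dots> \<le> max 1 (card I) * card S0"
      by (intro mult_right_mono) (use finI card_mono[of I "u \<inter> I"] in auto)
    finally show ?thesis .
  qed
  also have "\<dots> \<le> max 1 (card I) * card St" using cS0 by simp
  finally show ?thesis by (simp add: Mfact_def St'_def St_def h'_def)
qed


context setting
begin

definition ext :: "nat set \<Rightarrow> (nat \<Rightarrow> int) \<Rightarrow> (nat \<Rightarrow> int)" where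
  "ext u h = (\<lambda>j. if j \<in> u then h j else if j \<in> {1..d} then 0 else undefined)"

definition zero0 :: "nat \<Rightarrow> int" where "zero0 = restrict (\<lambda>_. 0) {1..d}"

definition Zs :: "(nat \<Rightarrow> int) set" where "Zs = ZZ {1..d} - {zero0}"

definition UU :: "nat set set" where "UU = {u. u \<subseteq> {1..d} \<and> u \<noteq> {}}"

definition NZ :: "nat set \<Rightarrow> (nat \<Rightarrow> int) set" where "NZ u = PiE u (\<lambda>_. - {0})"

lemma ext_ZZ: "u \<subseteq> {1..d} \<Longrightarrow> h \<in> PiE u B \<Longrightarrow> ext u h \<in> ZZ {1..d}"
  by (auto simp: ZZ_def ext_def PiE_def extensional_def)

lemma ext_Zs:
  assumes "u \<in> UU" "h \<in> NZ u" shows "ext u h \<in> Zs"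
proof -
  from assms obtain j where j: "j \<in> u" by (auto simp: UU_def)
  hence "ext u h j \<noteq> 0" using assms by (auto simp: ext_def NZ_def PiE_def Pi_def)
  moreover have "zero0 j = 0" using j assms by (auto simp: zero0_def UU_def)
  ultimately have "ext u h \<noteq> zero0" by metis
  thus ?thesis using ext_ZZ[of u h] assms by (auto simp: Zs_def UU_def NZ_def)
qed

lemma ext_inj: "inj_on (ext u) (PiE u B)"
proof (rule inj_onI)
  fix h h' assume h: "h \<in> PiE u B" and h': "h' \<in> PiE u B" and e: "ext u h = ext u h'"
  show "h = h'"
  proof (rule PiE_ext[OF h h'])
    fix j assume "j \<in> u"
    thus "h j = h' j" using fun_cong[OF e, of j] by (simp add: ext_def)
  qed
qed

lemma ext_supp:
  assumes "u \<subseteq> {1..d}" "h \<in> NZ u"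
  shows "{j \<in> {1..d}. ext u h j \<noteq> 0} = u"
  using assms by (auto simp: ext_def NZ_def PiE_def Pi_def)

lemma Zs_decomp: "Zs = (\<Union>u\<in>UU. ext u ` NZ u)"
proof (intro equalityI subsetI)
  fix g assume g: "g \<in> Zs"
  hence gZ: "g \<in> PiE {1..d} (\<lambda>_. UNIV)" and g0: "g \<noteq> zero0" by (auto simp: Zs_def ZZ_def)
  define u where "u = {j \<in> {1..d}. g j \<noteq> 0}"
  have "u \<noteq> {}"
  proof
    assume "u = {}"
    hence "g j = zero0 j" for j using gZ by (cases "j \<in> {1..d}") (auto simp: u_def zero0_def PiE_def extensional_def)
    thus False using g0 by auto
  qed
  hence uU: "u \<in> UU" by (auto simp: UU_def u_def)
  have hN: "restrict g u \<in> NZ u" by (auto simp: NZ_def u_def)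
  have "ext u (restrict g u) = g"
  proof
    fix j show "ext u (restrict g u) j = g j"
      using gZ by (auto simp: ext_def u_def PiE_def extensional_def)
  qed
  thus "g \<in> (\<Union>u\<in>UU. ext u ` NZ u)" using uU hN by (metis UN_iff image_eqI)
next
  fix g assume "g \<in> (\<Union>u\<in>UU. ext u ` NZ u)"
  thus "g \<in> Zs" using ext_Zs by auto
qed

lemma decomp_infsum:
  fixes \<phi> :: "(nat \<Rightarrow> int) \<Rightarrow> real"
  assumes sm: "\<phi> summable_on Zs"
  shows "infsum \<phi> Zs = (\<Sum>u\<in>UU. infsum (\<lambda>h. \<phi> (ext u h)) (NZ u))"
proof -
  have finU: "finite UU" by (rule finite_subset[of _ "Pow {1..d}"]) (auto simp: UU_def)
  have "(\<Sum>u\<in>UU. infsum \<phi> (ext u ` NZ u)) = infsum \<phi> (\<Union>u\<in>UU. ext u ` NZ u)"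
  proof (rule sum_infsum[OF finU])
    fix u assume "u \<in> UU"
    show "\<phi> summable_on ext u ` NZ u"
      by (rule summable_on_subset[OF sm]) (use ext_Zs \<open>u \<in> UU\<close> in auto)
  next
    fix u u' assume u: "u \<in> UU" and u': "u' \<in> UU" and ne: "u \<noteq> u'"
    show "ext u ` NZ u \<inter> ext u' ` NZ u' = {}"
    proof (rule ccontr)
      assume "ext u ` NZ u \<inter> ext u' ` NZ u' \<noteq> {}"
      then obtain h h' where h: "h \<in> NZ u" and h': "h' \<in> NZ u'" and e: "ext u h = ext u' h'" by blast
      have "u = u'" using ext_supp[OF _ h] ext_supp[OF _ h'] u u' e by (auto simp: UU_def)
      thus False using ne by simp
    qed
  qed
  also have "(\<Union>u\<in>UU. ext u ` NZ u) = Zs" by (rule Zs_decomp[symmetric])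
  finally have "infsum \<phi> Zs = (\<Sum>u\<in>UU. infsum \<phi> (ext u ` NZ u))" by simp
  also have "\<dots> = (\<Sum>u\<in>UU. infsum (\<lambda>h. \<phi> (ext u h)) (NZ u))"
    by (rule sum.cong) (auto simp: infsum_reindex[OF ext_inj] o_def NZ_def)
  finally show ?thesis .
qed

lemma sum_UU_by_max:
  fixes F :: "nat set \<Rightarrow> real"
  shows "(\<Sum>u\<in>UU. F u) = (\<Sum>l\<in>{1..d}. \<Sum>u\<in>{u. u \<subseteq> {1..l} \<and> l \<in> u}. F u)"
proof -
  define V where "V l = {u. u \<subseteq> {1..l} \<and> l \<in> u}" for l :: nat
  have UUe: "UU = (\<Union>l\<in>{1..d}. V l)"
  proof (intro equalityI subsetI)
    fix u assume u: "u \<in> UU"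
    hence fu: "finite u" "u \<noteq> {}" "u \<subseteq> {1..d}" by (auto simp: UU_def intro: finite_subset)
    have "Max u \<in> u" using fu by simp
    moreover have "u \<subseteq> {1..Max u}" using fu by auto
    moreover have "Max u \<in> {1..d}" using fu(3) \<open>Max u \<in> u\<close> by blast
    ultimately show "u \<in> (\<Union>l\<in>{1..d}. V l)" unfolding V_def by blast
  next
    fix u assume "u \<in> (\<Union>l\<in>{1..d}. V l)"
    thus "u \<in> UU" by (auto simp: V_def UU_def)
  qed
  have "(\<Sum>u\<in>UU. F u) = (\<Sum>l\<in>{1..d}. sum F (V l))"
    unfolding UUe
  proof (rule sum.UNION_disjoint)
    show "\<forall>i\<in>{1..d}. finite (V i)"
      by (auto simp: V_def intro: finite_subset[of _ "Pow {1.._}"])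
    show "\<forall>i\<in>{1..d}. \<forall>j\<in>{1..d}. i \<noteq> j \<longrightarrow> V i \<inter> V j = {}"
      by (auto simp: V_def) (meson atLeastAtMost_iff le_antisym subsetD)+
  qed simp
  thus ?thesis by (simp add: V_def)
qed

end

context setting
begin

definition idot :: "nat set \<Rightarrow> (nat \<Rightarrow> int) \<Rightarrow> (nat \<Rightarrow> int) \<Rightarrow> int" where
  "idot u h w = (\<Sum>j\<in>u. h j * w j)"

definition ind :: "int \<Rightarrow> real" where "ind m = (if m mod int n = 0 then 1 else 0)"

definition Mq :: "nat set \<Rightarrow> (nat \<Rightarrow> int) \<Rightarrow> real" where
  "Mq u h = real (Mfact u I h) / real (card (Sset u I))"

definition tau :: "nat set \<Rightarrow> (nat \<Rightarrow> int) \<Rightarrow> real" where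
  "tau u h = Mq u h * (1 / rfun R \<alpha> \<beta>0 \<beta>1 u h)"

lemma finI: "finite I" using I finite_subset by blast

lemma card_Sset: "finite u \<Longrightarrow> card (Sset u I) = fact (card (u \<inter> I))"
  unfolding Sset_def by (rule card_permutations) auto

lemma Mfact_le: "finite u \<Longrightarrow> Mfact u I h \<le> card (Sset u I)"
  unfolding Mfact_def by (rule card_mono[OF Sset_finite]) auto

lemma Mq_nonneg: "0 \<le> Mq u h" by (simp add: Mq_def)

lemma Mq_le1: "finite u \<Longrightarrow> Mq u h \<le> 1"
proof -
  assume u: "finite u"
  have a: "real (Mfact u I h) \<le> real (card (Sset u I))" using Mfact_le[OF u, of h] by simp
  have b: "real (card (Sset u I)) > 0" using card_Sset[OF u] by simp
  show ?thesis using a b by (simp add: Mq_def divide_le_eq)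
qed

lemma tau_nonneg: "0 \<le> tau u h"
  using rfun_pos[of u h] by (simp add: tau_def Mq_nonneg)

lemma tau_le: "finite u \<Longrightarrow> tau u h \<le> 1 / rfun R \<alpha> \<beta>0 \<beta>1 u h"
proof -
  assume u: "finite u"
  have "Mq u h * (1 / rfun R \<alpha> \<beta>0 \<beta>1 u h) \<le> 1 * (1 / rfun R \<alpha> \<beta>0 \<beta>1 u h)"
    by (rule mult_right_mono) (use Mq_le1[OF u, of h] rfun_pos[of u h] in auto)
  thus ?thesis by (simp add: tau_def)
qed

lemma idot_ext: "u \<subseteq> {1..d} \<Longrightarrow> idot {1..d} (ext u h) w = idot u h w"
proof -
  assume u: "u \<subseteq> {1..d}"
  have "idot {1..d} (ext u h) w = (\<Sum>j\<in>{1..d} - u. ext u h j * w j) + (\<Sum>j\<in>u. ext u h j * w j)"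
    unfolding idot_def by (rule sum.subset_diff[OF u]) simp
  also have "\<dots> = idot u h w" by (simp add: ext_def idot_def)
  finally show ?thesis .
qed

lemma inv_rfun_ext:
  assumes u: "u \<subseteq> {1..d}" and h: "h \<in> NZ u"
  shows "1 / rfun R \<alpha> \<beta>0 \<beta>1 {1..d} (ext u h) = \<beta>0 ^ (d - card u) * (1 / rfun R \<alpha> \<beta>0 \<beta>1 u h)"
proof -
  have "1 / rfun R \<alpha> \<beta>0 \<beta>1 {1..d} (ext u h) = (\<Prod>l\<in>{1..d}. wt (ext u h l))" by (rule inv_rfun)
  also have "\<dots> = (\<Prod>l\<in>{1..d} - u. wt (ext u h l)) * (\<Prod>l\<in>u. wt (ext u h l))"
    by (rule prod.subset_diff[OF u]) simp
  also have "(\<Prod>l\<in>{1..d} - u. wt (ext u h l)) = \<beta>0 ^ card ({1..d} - u)"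
    by (simp add: ext_def wt_def)
  also have "card ({1..d} - u) = d - card u" using u by (simp add: card_Diff_subset finite_subset)
  also have "(\<Prod>l\<in>u. wt (ext u h l)) = 1 / rfun R \<alpha> \<beta>0 \<beta>1 u h"
    by (simp add: inv_rfun ext_def)
  finally show ?thesis .
qed

lemma Mq_ext:
  assumes u: "u \<subseteq> {1..d}" and h: "h \<in> NZ u"
  shows "Mq {1..d} (ext u h) = Mq u h / real (card I choose card (I \<inter> u))"
proof -
  define g where "g = ext u h"
  have finu: "finite u" using u finite_subset by blast
  have gu: "g j \<noteq> 0" if "j \<in> u" for j using h that by (auto simp: g_def ext_def NZ_def PiE_def Pi_def)
  have gD: "g j = 0" if "j \<in> {1..d} - u" for j using that by (simp add: g_def ext_def)
  have DI: "{1..d} \<inter> I = I" using I by auto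
  have "Mfact {1..d} I g = card {P. P permutes I \<and> (\<forall>j\<in>{1..d}. g (P j) = g j)}"
    unfolding Mfact_def Sset_def DI by simp
  also have "\<dots> = card {P. P permutes (u \<inter> I) \<and> (\<forall>j\<in>u. g (P j) = g j)} * fact (card (I - u))"
    by (rule stab_decomp[OF _ u I gu gD]) auto
  also have "card {P. P permutes (u \<inter> I) \<and> (\<forall>j\<in>u. g (P j) = g j)} = Mfact u I g"
    by (simp add: Mfact_def Sset_def)
  also have "Mfact u I g = Mfact u I h" by (rule Mfact_cong) (simp add: g_def ext_def)
  finally have M: "Mfact {1..d} I g = Mfact u I h * fact (card (I - u))" .
  have cI: "card (I - u) = card I - card (I \<inter> u)"
    by (metis Diff_Int2 card_Diff_subset_Int finI finite_Int inf.commute inf_le2)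
  have kle: "card (I \<inter> u) \<le> card I" by (rule card_mono[OF finI]) auto
  have "Mq {1..d} g = real (Mfact u I h) * fact (card I - card (I \<inter> u)) / fact (card I)"
    using M cI card_Sset[of "{1..d}"] DI by (simp add: Mq_def)
  also have "\<dots> = real (Mfact u I h) / fact (card (u \<inter> I)) / real (card I choose card (I \<inter> u))"
    using kle by (simp add: binomial_fact Int_commute field_simps)
  also have "\<dots> = Mq u h / real (card I choose card (I \<inter> u))"
    using card_Sset[OF finu] by (simp add: Mq_def)
  finally show ?thesis by (simp add: g_def)
qed

lemma cfac_pos: "finite u \<Longrightarrow> cfac \<beta>0 I u > 0"
proof -
  assume "finite u"
  have "card (I \<inter> u) \<le> card I" by (rule card_mono[OF finI]) auto
  hence "(card I choose card (I \<inter> u)) > 0" by simp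
  thus ?thesis using beta by (simp add: cfac_def)
qed

lemma tau_ext:
  assumes u: "u \<subseteq> {1..d}" and h: "h \<in> NZ u"
  shows "tau {1..d} (ext u h) = \<beta>0 ^ d / cfac \<beta>0 I u * tau u h"
proof -
  have cu: "card u \<le> d" using u card_mono[of "{1..d}" u] by simp
  have bp: "\<beta>0 ^ (d - card u) = \<beta>0 ^ d / \<beta>0 ^ card u"
    using cu beta by (simp add: power_diff)
  show ?thesis
    unfolding tau_def Mq_ext[OF u h] inv_rfun_ext[OF u h] cfac_def bp
    by (simp add: field_simps)
qed

end

context setting
begin

definition VV :: "nat \<Rightarrow> nat set set" where "VV l = {u. u \<subseteq> {1..l} \<and> l \<in> u}"

lemma VV_sub: "l \<in> {1..d} \<Longrightarrow> u \<in> VV l \<Longrightarrow> u \<subseteq> {1..d} \<and> finite u \<and> l \<in> u"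
  by (auto simp: VV_def intro: finite_subset)

lemma VV_finite: "finite (VV l)"
  by (rule finite_subset[of _ "Pow {1..l}"]) (auto simp: VV_def)

lemma Bfun_eq: "Bfun R \<alpha> \<beta>0 \<beta>1 I n l w =
   (\<Sum>u\<in>VV l. (1 / cfac \<beta>0 I u) * infsum (\<lambda>h. tau u h * ind (idot u h w)) (NZ u))"
  unfolding Bfun_def VV_def NZ_def tau_def Mq_def ind_def idot_def by simp

lemma ind_01: "ind m = 0 \<or> ind m = 1" by (simp add: ind_def)
lemma ind_nonneg: "0 \<le> ind m" by (simp add: ind_def)
lemma ind_le1: "ind m \<le> 1" by (simp add: ind_def)

lemma sm_tau:
  assumes u: "finite u" and X: "\<And>h. 0 \<le> X h" "\<And>h. X h \<le> 1"
  shows "(\<lambda>h. tau u h * X h) summable_on PiE u B"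
proof (rule summable_on_comparison_test)
  show "(\<lambda>h. 1 / rfun R \<alpha> \<beta>0 \<beta>1 u h) summable_on PiE u B" by (rule inv_rfun_summable[OF u])
  fix h
  show "0 \<le> tau u h * X h" using tau_nonneg X by simp
  have "tau u h * X h \<le> tau u h * 1" by (rule mult_left_mono) (use X tau_nonneg in auto)
  thus "tau u h * X h \<le> 1 / rfun R \<alpha> \<beta>0 \<beta>1 u h" using tau_le[OF u, of h] by simp
qed

lemma sm_taup:
  assumes u: "finite u" and X: "\<And>h. 0 \<le> X h" "\<And>h. X h \<le> 1"
    and q: "q > 0" "2 * \<alpha> * q > 1"
  shows "(\<lambda>h. tau u h powr q * X h) summable_on PiE u B"
proof (rule summable_on_comparison_test)
  show "(\<lambda>h. (1 / rfun R \<alpha> \<beta>0 \<beta>1 u h) powr q) summable_on PiE u B"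
    by (rule inv_rfun_powr_summable[OF u q])
  fix h
  show "0 \<le> tau u h powr q * X h" using X by simp
  have "tau u h powr q * X h \<le> tau u h powr q * 1" by (rule mult_left_mono) (use X in auto)
  also have "\<dots> \<le> (1 / rfun R \<alpha> \<beta>0 \<beta>1 u h) powr q"
    using tau_le[OF u, of h] tau_nonneg[of u h] q by (simp add: powr_mono2)
  finally show "tau u h powr q * X h \<le> (1 / rfun R \<alpha> \<beta>0 \<beta>1 u h) powr q" .
qed

lemma Bfun_nonneg: "0 \<le> Bfun R \<alpha> \<beta>0 \<beta>1 I n l w"
  unfolding Bfun_eq
  by (intro sum_nonneg mult_nonneg_nonneg infsum_nonneg)
     (auto simp: cfac_def beta less_imp_le tau_nonneg ind_nonneg)

lemma Bfun_powr_le: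
  assumes l: "l \<in> {1..d}" and p: "0 < p" "p \<le> 1" "2 * \<alpha> * p > 1"
  shows "Bfun R \<alpha> \<beta>0 \<beta>1 I n l w powr p \<le>
    (\<Sum>u\<in>VV l. (1 / cfac \<beta>0 I u) powr p * infsum (\<lambda>h. tau u h powr p * ind (idot u h w)) (NZ u))"
proof -
  have "Bfun R \<alpha> \<beta>0 \<beta>1 I n l w powr p \<le>
      (\<Sum>u\<in>VV l. ((1 / cfac \<beta>0 I u) * infsum (\<lambda>h. tau u h * ind (idot u h w)) (NZ u)) powr p)"
    unfolding Bfun_eq
  proof (rule sum_powr_le[OF p(1,2)])
    fix u assume u: "u \<in> VV l"
    have "cfac \<beta>0 I u > 0" using cfac_pos VV_sub[OF l u] by blast
    moreover have "0 \<le> infsum (\<lambda>h. tau u h * ind (idot u h w)) (NZ u)"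
      by (rule infsum_nonneg) (simp add: tau_nonneg ind_nonneg)
    ultimately show "0 \<le> 1 / cfac \<beta>0 I u * infsum (\<lambda>h. tau u h * ind (idot u h w)) (NZ u)" by simp
  qed (simp add: VV_finite)
  also have "\<dots> \<le> (\<Sum>u\<in>VV l. (1 / cfac \<beta>0 I u) powr p * infsum (\<lambda>h. tau u h powr p * ind (idot u h w)) (NZ u))"
  proof (rule sum_mono)
    fix u assume u: "u \<in> VV l"
    have fu: "finite u" using VV_sub[OF l u] by simp
    have cp: "cfac \<beta>0 I u > 0" by (rule cfac_pos[OF fu])
    have "((1 / cfac \<beta>0 I u) * infsum (\<lambda>h. tau u h * ind (idot u h w)) (NZ u)) powr p
        = (1 / cfac \<beta>0 I u) powr p * (infsum (\<lambda>h. tau u h * ind (idot u h w)) (NZ u)) powr p"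
      using cp by (intro powr_mult) (auto intro!: infsum_nonneg simp: tau_nonneg ind_nonneg)?
    also have "(infsum (\<lambda>h. tau u h * ind (idot u h w)) (NZ u)) powr p
        \<le> infsum (\<lambda>h. (tau u h * ind (idot u h w)) powr p) (NZ u)"
    proof (rule infsum_powr_le[OF p(1,2)])
      show "(\<lambda>h. tau u h * ind (idot u h w)) summable_on NZ u"
        unfolding NZ_def by (rule sm_tau[OF fu]) (auto simp: ind_nonneg ind_le1)
      have "(\<lambda>h. tau u h powr p * ind (idot u h w)) summable_on NZ u"
        unfolding NZ_def by (rule sm_taup[OF fu _ _ p(1,3)]) (auto simp: ind_nonneg ind_le1)
      moreover have "(tau u h * ind (idot u h w)) powr p = tau u h powr p * ind (idot u h w)" for h
        using ind_01[of "idot u h w"] by auto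
      ultimately show "(\<lambda>h. (tau u h * ind (idot u h w)) powr p) summable_on NZ u" by simp
    qed (auto simp: tau_nonneg ind_nonneg)
    also have "(\<lambda>h. (tau u h * ind (idot u h w)) powr p) = (\<lambda>h. tau u h powr p * ind (idot u h w))"
    proof (rule ext)
      fix h show "(tau u h * ind (idot u h w)) powr p = tau u h powr p * ind (idot u h w)"
        using ind_01[of "idot u h w"] by auto
    qed
    finally show "((1 / cfac \<beta>0 I u) * infsum (\<lambda>h. tau u h * ind (idot u h w)) (NZ u)) powr p
      \<le> (1 / cfac \<beta>0 I u) powr p * infsum (\<lambda>h. tau u h powr p * ind (idot u h w)) (NZ u)"
      by (simp add: mult_left_mono)
  qed
  finally show ?thesis .
qed

end

context setting
begin

lemma n_pos: "n > 0" using n(1) prime_gt_0_nat by blast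
lemma n_ge_cR: "cR / real n \<le> 1" "cR / real n > 0" using n cR n_pos by auto

lemma wt_scale:
  assumes m: "m \<noteq> 0"
  shows "wt (int n * m) \<le> (cR / real n) powr (2 * \<alpha>) * wt m"
proof -
  define m' where "m' = nat \<bar>m\<bar>"
  have m'1: "m' \<ge> 1" using m by (simp add: m'_def)
  have e1: "real_of_int \<bar>int n * m\<bar> = real (n * m')" by (simp add: m'_def abs_mult)
  have e2: "real_of_int \<bar>m\<bar> = real m'" by (simp add: m'_def)
  have Rm: "R (real m') > 0" using R_pos m'1 by simp
  have low: "real n * R (real m') / cR \<le> R (real (n * m'))"
    using R_scale[rule_format, of n m'] n_pos m'1 cR by (auto simp: field_simps)
  have lowpos: "real n * R (real m') / cR > 0" using Rm n_pos cR by simp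
  have "R (real (n * m')) powr (- 2 * \<alpha>) \<le> (real n * R (real m') / cR) powr (- 2 * \<alpha>)"
    using low lowpos alpha by (intro powr_mono2') auto
  also have "\<dots> = (cR / real n) powr (2 * \<alpha>) * R (real m') powr (- 2 * \<alpha>)"
  proof -
    have eq0: "real n * R (real m') / cR = (real n / cR) * R (real m')" by simp
    have "(real n * R (real m') / cR) powr (- 2 * \<alpha>) = (real n / cR) powr (- 2 * \<alpha>) * R (real m') powr (- 2 * \<alpha>)"
      unfolding eq0 by (rule powr_mult)
    also have "(real n / cR) powr (- 2 * \<alpha>) = (cR / real n) powr (2 * \<alpha>)"
      using n_pos cR by (simp add: powr_minus_divide powr_divide)
    finally show ?thesis .
  qed
  finally have "R (real (n * m')) powr (- 2 * \<alpha>) \<le> (cR / real n) powr (2 * \<alpha>) * R (real m') powr (- 2 * \<alpha>)" .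
  hence "\<beta>1 * R (real (n * m')) powr (- 2 * \<alpha>) \<le> (cR / real n) powr (2 * \<alpha>) * (\<beta>1 * R (real m') powr (- 2 * \<alpha>))"
    using beta by (simp add: mult_left_mono mult.left_commute)
  moreover have e3: "real (n * m') = \<bar>real n * real_of_int m\<bar>" by (simp add: m'_def abs_mult)
  moreover have e4: "real m' = \<bar>real_of_int m\<bar>" by (simp add: m'_def)
  ultimately have X: "\<beta>1 * R \<bar>real n * real_of_int m\<bar> powr (- 2 * \<alpha>) \<le> (cR / real n) powr (2 * \<alpha>) * (\<beta>1 * R \<bar>real_of_int m\<bar> powr (- 2 * \<alpha>))"
    by simp
  thus ?thesis using m n_pos by (simp add: wt_def)
qed

lemma inv_rfun_scale:
  assumes u: "finite u" and l: "l \<in> u" and gl: "g l \<noteq> 0"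
  shows "1 / rfun R \<alpha> \<beta>0 \<beta>1 u (g(l := int n * g l)) \<le> (cR / real n) powr (2 * \<alpha>) * (1 / rfun R \<alpha> \<beta>0 \<beta>1 u g)"
proof -
  have "1 / rfun R \<alpha> \<beta>0 \<beta>1 u (g(l := int n * g l)) = wt (int n * g l) * (\<Prod>j\<in>u - {l}. wt (g j))"
    unfolding inv_rfun using u l by (simp add: prod.remove)
  also have "\<dots> \<le> ((cR / real n) powr (2 * \<alpha>) * wt (g l)) * (\<Prod>j\<in>u - {l}. wt (g j))"
    by (rule mult_right_mono[OF wt_scale[of "g l", OF gl]]) (auto intro: prod_nonneg less_imp_le wt_pos)
  also have "\<dots> = (cR / real n) powr (2 * \<alpha>) * (1 / rfun R \<alpha> \<beta>0 \<beta>1 u g)"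
    unfolding inv_rfun using u l by (simp add: prod.remove)
  finally show ?thesis .
qed

definition KK :: real where "KK = real (max 1 (card I))"

lemma KK_ge1: "KK \<ge> 1" by (simp add: KK_def)

lemma tau_scale:
  assumes u: "finite u" and l: "l \<in> u" and gl: "g l \<noteq> 0"
  shows "tau u (g(l := int n * g l)) \<le> KK * (cR / real n) powr (2 * \<alpha>) * tau u g"
proof -
  have cpos: "real (card (Sset u I)) > 0" using card_Sset[OF u] by simp
  have "real (Mfact u I (g(l := int n * g l))) \<le> real (max 1 (card I) * Mfact u I g)"
    using stab_change_le[OF u finI l] by (simp only: of_nat_le_iff)
  hence M: "Mq u (g(l := int n * g l)) \<le> KK * Mq u g"
    using cpos by (simp add: Mq_def KK_def divide_right_mono del: of_nat_max)
  have "tau u (g(l := int n * g l)) \<le> (KK * Mq u g) * ((cR / real n) powr (2 * \<alpha>) * (1 / rfun R \<alpha> \<beta>0 \<beta>1 u g))"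
    unfolding tau_def
    by (rule mult_mono[OF M inv_rfun_scale[of u l g, OF u l gl]])
       (use KK_ge1 Mq_nonneg rfun_pos in \<open>auto intro: less_imp_le\<close>)
  thus ?thesis by (simp add: tau_def mult_ac)
qed

lemma mult_bound:
  assumes u: "finite u" and l: "l \<in> u" and p: "0 < p" "2 * \<alpha> * p > 1"
  shows "infsum (\<lambda>h. tau u h powr p * (if int n dvd h l then 1 else 0)) (NZ u)
     \<le> KK powr p * (cR / real n) * infsum (\<lambda>h. tau u h powr p) (NZ u)"
proof -
  define \<sigma> where "\<sigma> g = g(l := int n * g l)" for g :: "nat \<Rightarrow> int"
  define Sub where "Sub = {h \<in> NZ u. int n dvd h l}"
  have inj: "inj_on \<sigma> (NZ u)"
  proof (rule inj_onI)
    fix g g' assume g: "g \<in> NZ u" and g': "g' \<in> NZ u" and e: "\<sigma> g = \<sigma> g'"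
    have "g l = g' l" using fun_cong[OF e, of l] n_pos by (simp add: \<sigma>_def)
    hence "g j = g' j" for j using fun_cong[OF e, of j] by (cases "j = l") (auto simp: \<sigma>_def)
    thus "g = g'" by auto
  qed
  have img: "\<sigma> ` NZ u = Sub"
  proof (intro equalityI subsetI)
    fix h assume "h \<in> \<sigma> ` NZ u"
    then obtain g where g: "g \<in> NZ u" and h: "h = \<sigma> g" by blast
    have "g l \<noteq> 0" using g l by (auto simp: NZ_def PiE_def Pi_def)
    thus "h \<in> Sub" using g l n_pos by (auto simp: h \<sigma>_def Sub_def NZ_def PiE_def Pi_def extensional_def)
  next
    fix h assume "h \<in> Sub"
    hence h: "h \<in> NZ u" and dv: "int n dvd h l" by (auto simp: Sub_def)
    then obtain m where m: "h l = int n * m" by (auto elim: dvdE)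
    have "m \<noteq> 0" using h l m by (auto simp: NZ_def PiE_def Pi_def)
    hence g: "h(l := m) \<in> NZ u" using h l by (auto simp: NZ_def PiE_def Pi_def extensional_def)
    have "\<sigma> (h(l := m)) = h" using m by (auto simp: \<sigma>_def)
    thus "h \<in> \<sigma> ` NZ u" using g by (metis image_eqI)
  qed
  have smp: "(\<lambda>h. tau u h powr p) summable_on NZ u"
    using sm_taup[OF u _ _ p, of "\<lambda>_. 1"] by (simp add: NZ_def)
  have "infsum (\<lambda>h. tau u h powr p * (if int n dvd h l then 1 else 0)) (NZ u) = infsum (\<lambda>h. tau u h powr p) Sub"
    by (rule infsum_cong_neutral) (auto simp: Sub_def)
  also have "\<dots> = infsum (\<lambda>g. tau u (\<sigma> g) powr p) (NZ u)"
    using infsum_reindex[OF inj, of "\<lambda>h. tau u h powr p"] img by (simp add: o_def)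
  also have "\<dots> \<le> infsum (\<lambda>g. KK powr p * (cR / real n) * tau u g powr p) (NZ u)"
  proof (rule infsum_mono)
    have "(\<lambda>h. tau u h powr p) summable_on \<sigma> ` NZ u"
      by (rule summable_on_subset[OF smp]) (auto simp: img Sub_def)
    thus "(\<lambda>g. tau u (\<sigma> g) powr p) summable_on NZ u"
      using summable_on_reindex[OF inj, of "\<lambda>h. tau u h powr p"] by (simp add: o_def)
    show "(\<lambda>g. KK powr p * (cR / real n) * tau u g powr p) summable_on NZ u"
      using smp by (rule summable_on_cmult_right)
    fix g assume g: "g \<in> NZ u"
    have gl: "g l \<noteq> 0" using g l by (auto simp: NZ_def PiE_def Pi_def)
    have "tau u (\<sigma> g) powr p \<le> (KK * (cR / real n) powr (2 * \<alpha>) * tau u g) powr p"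
      unfolding \<sigma>_def using tau_scale[of u l g, OF u l gl] tau_nonneg p by (intro powr_mono2) auto
    also have "\<dots> = KK powr p * ((cR / real n) powr (2 * \<alpha>)) powr p * tau u g powr p"
      using KK_ge1 tau_nonneg by (simp add: powr_mult)
    also have "((cR / real n) powr (2 * \<alpha>)) powr p = (cR / real n) powr (2 * \<alpha> * p)"
      by (simp add: powr_powr)
    also have "\<dots> \<le> (cR / real n) powr 1"
      by (rule powr_mono') (use p n_ge_cR in auto)
    finally show "tau u (\<sigma> g) powr p \<le> KK powr p * (cR / real n) * tau u g powr p"
      using n_ge_cR KK_ge1 cR by (simp add: mult_left_mono mult_right_mono mult_ac)
  qed
  also have "\<dots> = KK powr p * (cR / real n) * infsum (\<lambda>h. tau u h powr p) (NZ u)"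
    by (rule infsum_cmult_right')
  finally show ?thesis .
qed

lemma avg_count:
  assumes u: "finite u" and l: "l \<in> u"
  shows "(\<Sum>w\<in>{0..<int n}. ind (idot u h (z(l := w)))) \<le> (if int n dvd h l then real n else 1)"
proof -
  define s where "s = idot (u - {l}) h z"
  have ide: "idot u h (z(l := w)) = s + h l * w" for w
  proof -
    have "idot u h (z(l := w)) = h l * (z(l := w)) l + (\<Sum>j\<in>u - {l}. h j * (z(l := w)) j)"
      unfolding idot_def by (rule sum.remove[OF u l])
    moreover have "(\<Sum>j\<in>u - {l}. h j * (z(l := w)) j) = s"
      unfolding s_def idot_def by (rule sum.cong) auto
    ultimately show ?thesis by simp
  qed
  show ?thesis
  proof (cases "int n dvd h l")
    case True
    have "(\<Sum>w\<in>{0..<int n}. ind (idot u h (z(l := w)))) \<le> (\<Sum>w\<in>{0..<int n}. 1)"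
      by (rule sum_mono) (simp add: ind_le1)
    thus ?thesis using True by simp
  next
    case False
    define W where "W = {w \<in> {0..<int n}. int n dvd s + h l * w}"
    have "(\<Sum>w\<in>{0..<int n}. ind (idot u h (z(l := w)))) = (\<Sum>w\<in>{0..<int n}. if int n dvd s + h l * w then 1 else 0)"
      by (rule sum.cong) (auto simp: ind_def ide dvd_eq_mod_eq_0)
    also have "\<dots> = real (card W)" by (simp add: W_def sum.inter_filter[symmetric])
    also have "card W \<le> Suc 0"
    proof (subst card_le_Suc0_iff_eq)
      show "finite W" by (rule finite_subset[of _ "{0..<int n}"]) (auto simp: W_def)
      show "\<forall>a1\<in>W. \<forall>a2\<in>W. a1 = a2"
      proof (intro ballI)
        fix a1 a2 assume a1: "a1 \<in> W" and a2: "a2 \<in> W"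
        have "int n dvd (s + h l * a1) - (s + h l * a2)" using a1 a2 unfolding W_def by (intro dvd_diff) auto
        hence "int n dvd h l * (a1 - a2)" by (simp add: algebra_simps)
        moreover have "prime (int n)" using n(1) by (simp add: prime_nat_int_transfer)
        ultimately have "int n dvd a1 - a2" using False by (simp add: prime_dvd_mult_iff)
        moreover have "\<bar>a1 - a2\<bar> < int n" using a1 a2 by (auto simp: W_def)
        ultimately show "a1 = a2" using dvd_imp_le_int[of "a1 - a2" "int n"] by fastforce
      qed
    qed
    finally show ?thesis using False by simp
  qed
qed

end

context setting
begin

definition Sval :: real where
  "Sval = infsum (\<lambda>h. tau {1..d} h * ind (idot {1..d} h z)) Zs"

lemma Zs_sub: "Zs \<subseteq> PiE {1..d} (\<lambda>_. UNIV)" by (auto simp: Zs_def ZZ_def)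

lemma Sval_eq: "Sval = \<beta>0 ^ d * (\<Sum>l\<in>{1..d}. Bfun R \<alpha> \<beta>0 \<beta>1 I n l z)"
proof -
  have sm: "(\<lambda>h. tau {1..d} h * ind (idot {1..d} h z)) summable_on Zs"
    by (rule summable_on_subset[OF sm_tau Zs_sub]) (auto simp: ind_nonneg ind_le1)
  have "Sval = (\<Sum>u\<in>UU. infsum (\<lambda>h. tau {1..d} (ext u h) * ind (idot {1..d} (ext u h) z)) (NZ u))"
    unfolding Sval_def by (rule decomp_infsum[OF sm])
  also have "\<dots> = (\<Sum>u\<in>UU. \<beta>0 ^ d * ((1 / cfac \<beta>0 I u) * infsum (\<lambda>h. tau u h * ind (idot u h z)) (NZ u)))"
  proof (rule sum.cong[OF refl])
    fix u assume u: "u \<in> UU"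
    hence uD: "u \<subseteq> {1..d}" by (simp add: UU_def)
    have "infsum (\<lambda>h. tau {1..d} (ext u h) * ind (idot {1..d} (ext u h) z)) (NZ u)
        = infsum (\<lambda>h. (\<beta>0 ^ d / cfac \<beta>0 I u) * (tau u h * ind (idot u h z))) (NZ u)"
    proof (rule infsum_cong)
      fix h assume h: "h \<in> NZ u"
      show "tau {1..d} (ext u h) * ind (idot {1..d} (ext u h) z) = (\<beta>0 ^ d / cfac \<beta>0 I u) * (tau u h * ind (idot u h z))"
        by (simp only: tau_ext[OF uD h] idot_ext[OF uD])
    qed
    also have "\<dots> = (\<beta>0 ^ d / cfac \<beta>0 I u) * infsum (\<lambda>h. tau u h * ind (idot u h z)) (NZ u)"
      by (rule infsum_cmult_right')
    finally show "infsum (\<lambda>h. tau {1..d} (ext u h) * ind (idot {1..d} (ext u h) z)) (NZ u)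
        = \<beta>0 ^ d * ((1 / cfac \<beta>0 I u) * infsum (\<lambda>h. tau u h * ind (idot u h z)) (NZ u))" by simp
  qed
  also have "\<dots> = \<beta>0 ^ d * (\<Sum>u\<in>UU. (1 / cfac \<beta>0 I u) * infsum (\<lambda>h. tau u h * ind (idot u h z)) (NZ u))"
    by (simp add: sum_distrib_left)
  also have "(\<Sum>u\<in>UU. (1 / cfac \<beta>0 I u) * infsum (\<lambda>h. tau u h * ind (idot u h z)) (NZ u))
     = (\<Sum>l\<in>{1..d}. Bfun R \<alpha> \<beta>0 \<beta>1 I n l z)"
    unfolding sum_UU_by_max Bfun_eq VV_def ..
  finally show ?thesis .
qed

lemma Cdl_eq:
  assumes lam: "1 \<le> lam" "lam < 2 * \<alpha>"
  shows "Cdl R \<alpha> \<beta>0 \<beta>1 d I lam powr (1 / lam) =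
    (\<Sum>l\<in>{1..d}. \<Sum>u\<in>VV l. (\<beta>0 ^ d / cfac \<beta>0 I u) powr (1 / lam) * infsum (\<lambda>h. tau u h powr (1 / lam)) (NZ u))"
proof -
  define p where "p = 1 / lam"
  have p: "0 < p" "2 * \<alpha> * p > 1" using lam by (auto simp: p_def field_simps)
  have set: "ZZ {1..d} - {restrict (\<lambda>_. 0) {1..d}} = Zs" by (simp add: Zs_def zero0_def)
  have fe: "(real (Mfact {1..d} I h) / real (card (Sset {1..d} I)) / rfun R \<alpha> \<beta>0 \<beta>1 {1..d} h) = tau {1..d} h" for h
    by (simp add: tau_def Mq_def)
  define X where "X = infsum (\<lambda>h. tau {1..d} h powr p) Zs"
  have X0: "0 \<le> X" unfolding X_def by (rule infsum_nonneg) simp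
  have "Cdl R \<alpha> \<beta>0 \<beta>1 d I lam = X powr lam" unfolding Cdl_def set fe X_def p_def ..
  hence "Cdl R \<alpha> \<beta>0 \<beta>1 d I lam powr p = X" using X0 lam by (simp add: powr_powr p_def)
  also have "X = (\<Sum>u\<in>UU. infsum (\<lambda>h. tau {1..d} (ext u h) powr p) (NZ u))"
  proof -
    have "(\<lambda>h. tau {1..d} h powr p * 1) summable_on Zs"
      by (rule summable_on_subset[OF sm_taup[OF _ _ _ p] Zs_sub]) auto
    thus ?thesis unfolding X_def by (intro decomp_infsum) simp
  qed
  also have "\<dots> = (\<Sum>u\<in>UU. (\<beta>0 ^ d / cfac \<beta>0 I u) powr p * infsum (\<lambda>h. tau u h powr p) (NZ u))"
  proof (rule sum.cong[OF refl])
    fix u assume u: "u \<in> UU"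
    hence uD: "u \<subseteq> {1..d}" by (simp add: UU_def)
    have "infsum (\<lambda>h. tau {1..d} (ext u h) powr p) (NZ u)
        = infsum (\<lambda>h. (\<beta>0 ^ d / cfac \<beta>0 I u) powr p * tau u h powr p) (NZ u)"
    proof (rule infsum_cong)
      fix h assume h: "h \<in> NZ u"
      have "tau {1..d} (ext u h) powr p = (\<beta>0 ^ d / cfac \<beta>0 I u * tau u h) powr p"
        by (simp only: tau_ext[OF uD h])
      also have "\<dots> = (\<beta>0 ^ d / cfac \<beta>0 I u) powr p * tau u h powr p" by (rule powr_mult)
      finally show "tau {1..d} (ext u h) powr p = (\<beta>0 ^ d / cfac \<beta>0 I u) powr p * tau u h powr p" .
    qed
    also have "\<dots> = (\<beta>0 ^ d / cfac \<beta>0 I u) powr p * infsum (\<lambda>h. tau u h powr p) (NZ u)"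
      by (rule infsum_cmult_right')
    finally show "infsum (\<lambda>h. tau {1..d} (ext u h) powr p) (NZ u)
        = (\<beta>0 ^ d / cfac \<beta>0 I u) powr p * infsum (\<lambda>h. tau u h powr p) (NZ u)" .
  qed
  also have "\<dots> = (\<Sum>l\<in>{1..d}. \<Sum>u\<in>VV l. (\<beta>0 ^ d / cfac \<beta>0 I u) powr p * infsum (\<lambda>h. tau u h powr p) (NZ u))"
    unfolding sum_UU_by_max VV_def ..
  finally show ?thesis by (simp add: p_def)
qed

lemma inner_avg:
  assumes l: "l \<in> {1..d}" and u: "u \<in> VV l" and p: "0 < p" "2 * \<alpha> * p > 1"
  shows "(\<Sum>w\<in>{0..<int n}. infsum (\<lambda>h. tau u h powr p * ind (idot u h (z(l := w)))) (NZ u))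
     \<le> (1 + KK powr p * cR) * infsum (\<lambda>h. tau u h powr p) (NZ u)"
proof -
  have fu: "finite u" and lu: "l \<in> u" using VV_sub[OF l u] by auto
  define T where "T = infsum (\<lambda>h. tau u h powr p) (NZ u)"
  define dv where "dv h = (if int n dvd h l then 1 else 0 :: real)" for h :: "nat \<Rightarrow> int"
  have smI: "(\<lambda>h. tau u h powr p * X h) summable_on NZ u" if "\<And>h. 0 \<le> X h" "\<And>h. X h \<le> 1" for X
    unfolding NZ_def by (rule sm_taup[OF fu _ _ p]) (use that in auto)
  have smT: "(\<lambda>h. tau u h powr p) summable_on NZ u" using smI[of "\<lambda>_. 1"] by simp
  have smD: "(\<lambda>h. tau u h powr p * dv h) summable_on NZ u" by (rule smI) (auto simp: dv_def)
  have "(\<Sum>w\<in>{0..<int n}. infsum (\<lambda>h. tau u h powr p * ind (idot u h (z(l := w)))) (NZ u))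
      = infsum (\<lambda>h. \<Sum>w\<in>{0..<int n}. tau u h powr p * ind (idot u h (z(l := w)))) (NZ u)"
    by (rule infsum_finite_sum[symmetric]) (auto intro!: smI simp: ind_nonneg ind_le1)
  also have "\<dots> \<le> infsum (\<lambda>h. tau u h powr p + real n * (tau u h powr p * dv h)) (NZ u)"
  proof (rule infsum_mono)
    show "(\<lambda>h. \<Sum>w\<in>{0..<int n}. tau u h powr p * ind (idot u h (z(l := w)))) summable_on NZ u"
      by (rule summable_on_finite_sum) (auto intro!: smI simp: ind_nonneg ind_le1)
    show "(\<lambda>h. tau u h powr p + real n * (tau u h powr p * dv h)) summable_on NZ u"
      by (intro summable_on_add smT summable_on_cmult_right smD)
    fix h
    have "(\<Sum>w\<in>{0..<int n}. tau u h powr p * ind (idot u h (z(l := w))))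
        = tau u h powr p * (\<Sum>w\<in>{0..<int n}. ind (idot u h (z(l := w))))"
      by (simp add: sum_distrib_left)
    also have "\<dots> \<le> tau u h powr p * (1 + real n * dv h)"
      by (rule mult_left_mono) (use avg_count[OF fu lu, of h] in \<open>auto simp: dv_def split: if_splits\<close>)
    finally show "(\<Sum>w\<in>{0..<int n}. tau u h powr p * ind (idot u h (z(l := w))))
        \<le> tau u h powr p + real n * (tau u h powr p * dv h)" by (simp add: algebra_simps)
  qed
  also have "\<dots> = T + real n * infsum (\<lambda>h. tau u h powr p * dv h) (NZ u)"
    unfolding T_def by (subst infsum_add) (auto intro!: smT summable_on_cmult_right smD simp: infsum_cmult_right')
  also have "\<dots> \<le> T + real n * (KK powr p * (cR / real n) * T)"
    by (intro add_left_mono mult_left_mono) (use mult_bound[OF fu lu p] in \<open>simp_all add: T_def dv_def\<close>)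
  also have "\<dots> = (1 + KK powr p * cR) * T" using n_pos by (simp add: field_simps)
  finally show ?thesis by (simp add: T_def)
qed

end

context setting
begin

lemma B_bound:
  assumes l: "l \<in> {1..d}" and p: "0 < p" "p \<le> 1" "2 * \<alpha> * p > 1"
  shows "Bfun R \<alpha> \<beta>0 \<beta>1 I n l z powr p \<le> (1 + KK powr p * cR) / real n *
     (\<Sum>u\<in>VV l. (1 / cfac \<beta>0 I u) powr p * infsum (\<lambda>h. tau u h powr p) (NZ u))"
proof (cases "l = 1")
  case True
  have "Bfun R \<alpha> \<beta>0 \<beta>1 I n l z powr p \<le>
    (\<Sum>u\<in>VV l. (1 / cfac \<beta>0 I u) powr p * infsum (\<lambda>h. tau u h powr p * ind (idot u h z)) (NZ u))"
    by (rule Bfun_powr_le[OF l p])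
  also have "\<dots> \<le> (\<Sum>u\<in>VV l. (1 / cfac \<beta>0 I u) powr p * (KK powr p * (cR / real n) * infsum (\<lambda>h. tau u h powr p) (NZ u)))"
  proof (rule sum_mono, rule mult_left_mono)
    fix u assume u: "u \<in> VV l"
    have fu: "finite u" and lu: "l \<in> u" using VV_sub[OF l u] by auto
    have ue: "u = {1}" using u True by (auto simp: VV_def)
    have "infsum (\<lambda>h. tau u h powr p * ind (idot u h z)) (NZ u)
        \<le> infsum (\<lambda>h. tau u h powr p * (if int n dvd h l then 1 else 0)) (NZ u)"
    proof (rule infsum_mono)
      show "(\<lambda>h. tau u h powr p * ind (idot u h z)) summable_on NZ u"
        unfolding NZ_def by (rule sm_taup[OF fu _ _ p(1,3)]) (auto simp: ind_nonneg ind_le1)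
      show "(\<lambda>h. tau u h powr p * (if int n dvd h l then 1 else 0)) summable_on NZ u"
        unfolding NZ_def by (rule sm_taup[OF fu _ _ p(1,3)]) auto
      fix h
      have "ind (idot u h z) \<le> (if int n dvd h l then 1 else 0)"
      proof (cases "int n dvd h 1 * z 1")
        case True
        have "prime (int n)" using n(1) by (simp add: prime_nat_int_transfer)
        moreover have "\<not> int n dvd z 1"
        proof
          assume "int n dvd z 1"
          hence "int n \<le> z 1" using z1 zdvd_imp_le[of "int n" "z 1"] by auto
          thus False using z1 by auto
        qed
        ultimately have "int n dvd h 1" using True by (simp add: prime_dvd_mult_iff)
        thus ?thesis using \<open>l = 1\<close> by (simp add: ind_le1)
      next
        case False
        thus ?thesis by (simp add: ind_def idot_def ue dvd_eq_mod_eq_0)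
      qed
      thus "tau u h powr p * ind (idot u h z) \<le> tau u h powr p * (if int n dvd h l then 1 else 0)"
        by (rule mult_left_mono) simp
    qed
    also have "\<dots> \<le> KK powr p * (cR / real n) * infsum (\<lambda>h. tau u h powr p) (NZ u)"
      by (rule mult_bound[OF fu lu p(1,3)])
    finally show "infsum (\<lambda>h. tau u h powr p * ind (idot u h z)) (NZ u)
      \<le> KK powr p * (cR / real n) * infsum (\<lambda>h. tau u h powr p) (NZ u)" .
  qed simp
  also have "\<dots> \<le> (\<Sum>u\<in>VV l. (1 / cfac \<beta>0 I u) powr p * ((1 + KK powr p * cR) / real n * infsum (\<lambda>h. tau u h powr p) (NZ u)))"
  proof (rule sum_mono, rule mult_left_mono)
    fix u
    have "0 \<le> infsum (\<lambda>h. tau u h powr p) (NZ u)" by (rule infsum_nonneg) simp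
    moreover have "KK powr p * (cR / real n) \<le> (1 + KK powr p * cR) / real n"
      using n_pos by (simp add: field_simps)
    ultimately show "KK powr p * (cR / real n) * infsum (\<lambda>h. tau u h powr p) (NZ u)
      \<le> (1 + KK powr p * cR) / real n * infsum (\<lambda>h. tau u h powr p) (NZ u)"
      by (rule mult_right_mono[rotated])
  qed simp
  finally show ?thesis by (simp add: sum_distrib_left mult_ac)
next
  case False
  hence l2: "l \<in> {2..d}" using l by auto
  have zl: "\<forall>w\<in>{0..<int n}. Bfun R \<alpha> \<beta>0 \<beta>1 I n l z \<le> Bfun R \<alpha> \<beta>0 \<beta>1 I n l (z(l := w))"
    using zCBC l2 by blast
  define c where "c u = (1 / cfac \<beta>0 I u) powr p" for u
  define T where "T u = infsum (\<lambda>h. tau u h powr p) (NZ u)" for u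
  have c0: "0 \<le> c u" for u by (simp add: c_def)
  have "real n * Bfun R \<alpha> \<beta>0 \<beta>1 I n l z powr p = (\<Sum>w\<in>{0..<int n}. Bfun R \<alpha> \<beta>0 \<beta>1 I n l z powr p)"
    by simp
  also have "\<dots> \<le> (\<Sum>w\<in>{0..<int n}. Bfun R \<alpha> \<beta>0 \<beta>1 I n l (z(l := w)) powr p)"
    by (rule sum_mono) (use zl Bfun_nonneg p in \<open>auto intro!: powr_mono2\<close>)
  also have "\<dots> \<le> (\<Sum>w\<in>{0..<int n}. \<Sum>u\<in>VV l. c u * infsum (\<lambda>h. tau u h powr p * ind (idot u h (z(l := w)))) (NZ u))"
    unfolding c_def by (rule sum_mono) (rule Bfun_powr_le[OF l p])
  also have "\<dots> = (\<Sum>u\<in>VV l. c u * (\<Sum>w\<in>{0..<int n}. infsum (\<lambda>h. tau u h powr p * ind (idot u h (z(l := w)))) (NZ u)))"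
    by (subst sum.swap) (simp add: sum_distrib_left)
  also have "\<dots> \<le> (\<Sum>u\<in>VV l. c u * ((1 + KK powr p * cR) * T u))"
    by (rule sum_mono, rule mult_left_mono) (use inner_avg[OF l _ p(1,3)] c0 in \<open>auto simp: T_def\<close>)
  finally have "real n * Bfun R \<alpha> \<beta>0 \<beta>1 I n l z powr p \<le> (1 + KK powr p * cR) * (\<Sum>u\<in>VV l. c u * T u)"
    by (simp add: sum_distrib_left mult_ac)
  thus ?thesis using n_pos by (simp add: c_def T_def field_simps)
qed

theorem partC:
  assumes lam: "1 \<le> lam" "lam < 2 * \<alpha>"
  shows "Sval \<le> (1 + cR) powr lam * Cdl R \<alpha> \<beta>0 \<beta>1 d I lam * KK / real n powr lam"
proof -
  define p where "p = 1 / lam"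
  have p: "0 < p" "p \<le> 1" "2 * \<alpha> * p > 1" using lam by (auto simp: p_def field_simps)
  define A where "A = (1 + KK powr p * cR) / real n"
  have A0: "0 \<le> A" using n_pos cR by (simp add: A_def)
  have B0: "\<And>l. 0 \<le> Bfun R \<alpha> \<beta>0 \<beta>1 I n l z" by (rule Bfun_nonneg)
  have S0: "0 \<le> Sval" unfolding Sval_eq using B0 beta by (simp add: sum_nonneg)
  have "Sval powr p \<le> (\<Sum>l\<in>{1..d}. (\<beta>0 ^ d * Bfun R \<alpha> \<beta>0 \<beta>1 I n l z) powr p)"
    unfolding Sval_eq sum_distrib_left by (rule sum_powr_le[OF p(1,2)]) (use B0 beta in auto)
  also have "\<dots> \<le> (\<Sum>l\<in>{1..d}. (\<beta>0 ^ d) powr p * (A *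
     (\<Sum>u\<in>VV l. (1 / cfac \<beta>0 I u) powr p * infsum (\<lambda>h. tau u h powr p) (NZ u))))"
  proof (rule sum_mono)
    fix l assume l: "l \<in> {1..d}"
    have "(\<beta>0 ^ d * Bfun R \<alpha> \<beta>0 \<beta>1 I n l z) powr p = (\<beta>0 ^ d) powr p * Bfun R \<alpha> \<beta>0 \<beta>1 I n l z powr p"
      by (rule powr_mult)
    also have "\<dots> \<le> (\<beta>0 ^ d) powr p * (A *
     (\<Sum>u\<in>VV l. (1 / cfac \<beta>0 I u) powr p * infsum (\<lambda>h. tau u h powr p) (NZ u)))"
      unfolding A_def by (rule mult_left_mono[OF B_bound[OF l p]]) simp
    finally show "(\<beta>0 ^ d * Bfun R \<alpha> \<beta>0 \<beta>1 I n l z) powr p \<le> (\<beta>0 ^ d) powr p * (A *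
     (\<Sum>u\<in>VV l. (1 / cfac \<beta>0 I u) powr p * infsum (\<lambda>h. tau u h powr p) (NZ u)))" .
  qed
  also have "\<dots> = A * (\<Sum>l\<in>{1..d}. \<Sum>u\<in>VV l. (\<beta>0 ^ d / cfac \<beta>0 I u) powr p * infsum (\<lambda>h. tau u h powr p) (NZ u))"
  proof -
    have "(\<beta>0 ^ d / cfac \<beta>0 I u) powr p = (\<beta>0 ^ d) powr p * (1 / cfac \<beta>0 I u) powr p" for u
      by (simp add: powr_mult[symmetric])
    thus ?thesis by (simp add: sum_distrib_left mult_ac)
  qed
  also have "\<dots> = A * Cdl R \<alpha> \<beta>0 \<beta>1 d I lam powr p"
    using Cdl_eq[OF lam] by (simp add: p_def)
  finally have Sp: "Sval powr p \<le> A * Cdl R \<alpha> \<beta>0 \<beta>1 d I lam powr p" .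
  have C0: "0 \<le> Cdl R \<alpha> \<beta>0 \<beta>1 d I lam" by (simp add: Cdl_def)
  have "Sval = (Sval powr p) powr lam" using S0 lam by (simp add: powr_powr p_def)
  also have "\<dots> \<le> (A * Cdl R \<alpha> \<beta>0 \<beta>1 d I lam powr p) powr lam"
    by (rule powr_mono2) (use Sp lam in auto)
  also have "\<dots> = A powr lam * Cdl R \<alpha> \<beta>0 \<beta>1 d I lam"
    using A0 C0 lam by (simp add: powr_mult powr_powr p_def)
  also have "A powr lam \<le> (KK powr p * (1 + cR) / real n) powr lam"
  proof (rule powr_mono2)
    have "1 \<le> KK powr p" using KK_ge1 p by (intro ge_one_powr_ge_zero) auto
    hence "1 + KK powr p * cR \<le> KK powr p * (1 + cR)" by (simp add: algebra_simps)
    thus "A \<le> KK powr p * (1 + cR) / real n" using n_pos by (simp add: A_def divide_right_mono)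
  qed (use lam A0 in auto)
  also have "(KK powr p * (1 + cR) / real n) powr lam = KK * (1 + cR) powr lam / real n powr lam"
    using KK_ge1 cR lam n_pos by (simp add: powr_divide powr_mult powr_powr p_def)
  finally show ?thesis using C0 by (simp add: mult_right_mono mult_ac)
qed

end

lemma meas_id_leb[measurable]: "(\<lambda>x::real. x) \<in> borel_measurable (lebesgue_on S)"
  by (rule measurable_restrict_space1) (simp add: measurable_completion)

lemma cis_borel: "cis \<in> borel_measurable borel"
proof -
  have "continuous_on UNIV (\<lambda>x. cis x)" by (intro continuous_intros)
  thus ?thesis by (rule borel_measurable_continuous_onI)
qed

lemma meas_cis[measurable]: "f \<in> borel_measurable M \<Longrightarrow> (\<lambda>x. cis (f x)) \<in> borel_measurable M"
  using measurable_compose[OF _ cis_borel] by blast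

lemma emeasure_leb01: "emeasure (lebesgue_on {0..1::real}) (space (lebesgue_on {0..1::real})) = 1"
  by (simp add: emeasure_restrict_space space_restrict_space)

lemma fin_leb01: "finite_measure (lebesgue_on {0..1::real})"
proof (rule finite_measureI)
  show "emeasure (lebesgue_on {0..1::real}) (space (lebesgue_on {0..1::real})) \<noteq> \<infinity>"
    unfolding emeasure_leb01 by simp
qed

lemma sig_leb01: "sigma_finite_measure (lebesgue_on {0..1::real})"
  using fin_leb01 by (simp add: finite_measure_def)

lemma emeasure_cube: "emeasure (cube_measure d) (space (cube_measure d)) = 1"
proof -
  interpret product_sigma_finite "\<lambda>_::nat. lebesgue_on {0..1::real}"
    by (intro product_sigma_finite.intro sig_leb01)
  have "space (cube_measure d) = PiE {1..d} (\<lambda>_. space (lebesgue_on {0..1::real}))"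
    by (simp add: cube_measure_def space_PiM)
  hence "emeasure (cube_measure d) (space (cube_measure d))
      = (\<Prod>i\<in>{1..d}. emeasure (lebesgue_on {0..1::real}) (space (lebesgue_on {0..1::real})))"
    unfolding cube_measure_def by (simp add: emeasure_PiM)
  also have "\<dots> = 1" using emeasure_leb01 by simp
  finally show ?thesis .
qed

lemma fin_cube: "finite_measure (cube_measure d)"
  by (rule finite_measureI) (simp add: emeasure_cube)

lemma space_cube: "space (cube_measure d) = cube d"
  by (simp add: cube_measure_def space_PiM cube_def space_restrict_space)

lemma char_1d:
  fixes m :: int
  shows "(LINT t|lebesgue_on {0..1}. cis (2 * pi * (real_of_int m * t))) = (if m = 0 then 1 else 0)"
proof -
  let ?f = "\<lambda>t::real. cis (2 * pi * (real_of_int m * t))"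
  have int: "integrable (lebesgue_on {0..1}) ?f"
    by (rule finite_measure.integrable_const_bound[where B=1])
       (auto intro: fin_leb01)
  have hk: "(?f has_integral (if m = 0 then 1 else 0)) {0..1}"
  proof (cases "m = 0")
    case True
    thus ?thesis using has_integral_const_real[of "1::complex" 0 1] by simp
  next
    case False
    define F where "F t = (- \<i> / (2 * pi * real_of_int m)) * cis (2 * pi * (real_of_int m * t))" for t
    have "(?f has_integral (F 1 - F 0)) {0..1}"
    proof (rule fundamental_theorem_of_calculus)
      fix x :: real assume "x \<in> {0..1}"
      have "((\<lambda>t. cis (2 * pi * (real_of_int m * t))) has_derivative
              (\<lambda>h. (2 * pi * (real_of_int m * h)) *\<^sub>R (\<i> * cis (2 * pi * (real_of_int m * x))))) (at x within {0..1})"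
        by (intro has_derivative_cis derivative_eq_intros) auto
      hence "(F has_derivative (\<lambda>h. (- \<i> / (2 * pi * real_of_int m)) *
              ((2 * pi * (real_of_int m * h)) *\<^sub>R (\<i> * cis (2 * pi * (real_of_int m * x)))))) (at x within {0..1})"
        unfolding F_def by (intro has_derivative_mult_right)
      moreover have "(\<lambda>h. (- \<i> / (2 * pi * real_of_int m)) *
              ((2 * pi * (real_of_int m * h)) *\<^sub>R (\<i> * cis (2 * pi * (real_of_int m * x)))))
            = (\<lambda>h. h *\<^sub>R cis (2 * pi * (real_of_int m * x)))"
        using False by (auto simp: fun_eq_iff scaleR_conv_of_real field_simps)
      ultimately show "(F has_vector_derivative ?f x) (at x within {0..1})"
        by (simp add: has_vector_derivative_def)
    qed simp
    moreover have "F 1 = F 0"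
    proof -
      have "cis (2 * pi * (real_of_int m * 1)) = 1"
        using cis_multiple_2pi[of "real_of_int m"] by simp
      thus ?thesis by (simp add: F_def)
    qed
    ultimately show ?thesis using False by simp
  qed
  have "(?f has_integral (LINT t|lebesgue_on {0..1}. ?f t)) {0..1}"
    by (rule has_integral_integral_lebesgue_on[OF int]) simp
  thus ?thesis using hk has_integral_unique by blast
qed

lemma cis_sum: "finite A \<Longrightarrow> cis (\<Sum>i\<in>A. f i) = (\<Prod>i\<in>A. cis (f i))"
  by (induction A rule: finite_induct) (auto simp: cis_mult[symmetric])

lemma char_cube:
  fixes v :: "nat \<Rightarrow> int"
  shows "(LINT x|cube_measure d. cis (2 * pi * dotp d v x)) = (if \<forall>i\<in>{1..d}. v i = 0 then 1 else 0)"
proof -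
  interpret product_sigma_finite "\<lambda>_::nat. lebesgue_on {0..1::real}"
    by (intro product_sigma_finite.intro sig_leb01)
  have e: "cis (2 * pi * dotp d v x) = (\<Prod>i\<in>{1..d}. cis (2 * pi * (real_of_int (v i) * x i)))" for x
    unfolding dotp_def by (simp add: sum_distrib_left cis_sum)
  have "(LINT x|cube_measure d. cis (2 * pi * dotp d v x))
      = (LINT x|cube_measure d. (\<Prod>i\<in>{1..d}. (\<lambda>i t. cis (2 * pi * (real_of_int (v i) * t))) i (x i)))"
    by (simp add: e)
  also have "\<dots> = (\<Prod>i\<in>{1..d}. LINT t|lebesgue_on {0..1}. cis (2 * pi * (real_of_int (v i) * t)))"
    unfolding cube_measure_def
    by (rule product_integral_prod)
       (auto intro!: finite_measure.integrable_const_bound[where B=1] fin_leb01)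
  also have "\<dots> = (\<Prod>i\<in>{1..d}. if v i = 0 then 1 else 0)" by (simp add: char_1d)
  also have "\<dots> = (if \<forall>i\<in>{1..d}. v i = 0 then 1 else 0)"
    by (induction d) (auto simp: atLeastAtMostSuc_conv)
  finally show ?thesis .
qed


context setting
begin

lemma cnj_borel: "cnj \<in> borel_measurable borel"
proof -
  have "continuous_on UNIV (\<lambda>x. cnj x)" by (intro continuous_intros)
  thus ?thesis by (rule borel_measurable_continuous_onI)
qed

lemma meas_cnj[measurable]: "f \<in> borel_measurable M \<Longrightarrow> (\<lambda>x. cnj (f x)) \<in> borel_measurable M"
  using measurable_compose[OF _ cnj_borel] by blast

definition SG :: "(nat \<Rightarrow> nat) set" where "SG = Sset {1..d} I"

lemma DI: "{1..d} \<inter> I = I" using I by auto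

lemma SG_eq: "SG = {P. P permutes I}" unfolding SG_def Sset_def DI by simp

lemma SG_perm: "P \<in> SG \<Longrightarrow> P permutes {1..d}"
  using I by (auto simp: SG_eq intro: permutes_subset)

lemma SG_inv: "P \<in> SG \<Longrightarrow> inv P \<in> SG"
  by (simp add: SG_eq permutes_inv)

lemma SG_comp: "P \<in> SG \<Longrightarrow> Q \<in> SG \<Longrightarrow> P \<circ> Q \<in> SG"
  by (simp add: SG_eq permutes_compose)

lemma SG_id: "id \<in> SG" by (simp add: SG_eq permutes_id)

lemma SG_finite: "finite SG" by (simp add: SG_def Sset_finite)

lemma SG_card_pos: "card SG > 0" using SG_finite SG_id card_gt_0_iff by blast

lemma comp_ZZ: "k \<in> ZZ {1..d} \<Longrightarrow> P \<in> SG \<Longrightarrow> k \<circ> P \<in> ZZ {1..d}"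
  using SG_perm[of P] by (auto simp: ZZ_def PiE_def extensional_def permutes_not_in)

lemma comp_zero: "P \<in> SG \<Longrightarrow> k \<in> ZZ {1..d} \<Longrightarrow> k \<circ> P = zero0 \<Longrightarrow> k = zero0"
proof -
  assume P: "P \<in> SG" and k: "k \<in> ZZ {1..d}" and e: "k \<circ> P = zero0"
  have Pp: "P permutes {1..d}" by (rule SG_perm[OF P])
  show "k = zero0"
  proof
    fix j show "k j = zero0 j"
    proof (cases "j \<in> {1..d}")
      case True
      have "inv P j \<in> {1..d}" using permutes_maps[OF permutes_inv[OF Pp] True] .
      hence "k (P (inv P j)) = 0" using fun_cong[OF e, of "inv P j"] by (simp add: zero0_def)
      thus ?thesis using True by (simp add: permutes_inverses(1)[OF Pp] zero0_def)
    next
      case False thus ?thesis using k by (auto simp: zero0_def ZZ_def PiE_def extensional_def)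
    qed
  qed
qed

lemma comp_Zs: "k \<in> Zs \<Longrightarrow> P \<in> SG \<Longrightarrow> k \<circ> P \<in> Zs"
  using comp_ZZ comp_zero by (auto simp: Zs_def)

lemma comp_inv_id: "P \<in> SG \<Longrightarrow> k \<circ> inv P \<circ> P = k"
  using permutes_inverses(2)[OF SG_perm] by (auto simp: fun_eq_iff)

lemma rfun_comp: "P \<in> SG \<Longrightarrow> rfun R \<alpha> \<beta>0 \<beta>1 {1..d} (k \<circ> P) = rfun R \<alpha> \<beta>0 \<beta>1 {1..d} k"
  unfolding rfun_def o_def
  by (rule prod.reindex_bij_betw[OF permutes_imp_bij[OF SG_perm]])

lemma idot_comp_dep: "(\<forall>i\<in>{1..d}. g i = g' i) \<Longrightarrow> idot {1..d} g w = idot {1..d} g' w"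
  by (simp add: idot_def)

definition cP :: "(nat \<Rightarrow> int) \<Rightarrow> (nat \<Rightarrow> nat) \<Rightarrow> bool" where
  "cP k P = (int n dvd idot {1..d} (k \<circ> P) z)"

definition acoef :: "(nat \<Rightarrow> int) \<Rightarrow> (nat \<Rightarrow> real) \<Rightarrow> complex" where
  "acoef k \<Delta> = (\<Sum>P\<in>SG. if cP k P then cis (2 * pi * dotp d (k \<circ> P) \<Delta>) else 0) / of_nat (card SG)"

lemma acoef_norm: "cmod (acoef k \<Delta>) \<le> 1"
proof -
  have "cmod (\<Sum>P\<in>SG. if cP k P then cis (2 * pi * dotp d (k \<circ> P) \<Delta>) else 0)
      \<le> (\<Sum>P\<in>SG. cmod (if cP k P then cis (2 * pi * dotp d (k \<circ> P) \<Delta>) else 0))"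
    by (rule norm_sum)
  also have "\<dots> \<le> (\<Sum>P\<in>SG. 1)" by (rule sum_mono) auto
  finally show ?thesis using SG_card_pos by (simp add: acoef_def norm_divide divide_le_eq)
qed

lemma acoef_meas[measurable]: "(\<lambda>\<Delta>. acoef k \<Delta>) \<in> borel_measurable (cube_measure d)"
  unfolding acoef_def dotp_def cube_measure_def by measurable

lemma dotp_diff: "dotp d g x - dotp d g' x = dotp d (\<lambda>i. g i - g' i) x"
  by (simp add: dotp_def sum_subtractf[symmetric] algebra_simps)

definition ECnt :: "(nat \<Rightarrow> int) \<Rightarrow> real" where
  "ECnt k = (\<Sum>P\<in>SG. \<Sum>P'\<in>SG. if cP k P \<and> (\<forall>i\<in>{1..d}. k (P i) = k (P' i)) then 1 else 0)"

lemma acoef_int: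
  "(LINT \<Delta>|cube_measure d. (cmod (acoef k \<Delta>))\<^sup>2) = ECnt k / (real (card SG))\<^sup>2"
proof -
  define c where "c = real (card SG)"
  define chi where "chi P = (if cP k P then 1 else 0 :: complex)" for P
  define \<theta> where "\<theta> P \<Delta> = 2 * pi * dotp d (k \<circ> P) \<Delta>" for P \<Delta>
  have cpos: "c > 0" using SG_card_pos by (simp add: c_def)
  have cchi: "cnj (chi P) = chi P" for P by (simp add: chi_def)
  have aeq: "acoef k \<Delta> = (\<Sum>P\<in>SG. chi P * cis (\<theta> P \<Delta>)) / of_real c" for \<Delta>
    unfolding acoef_def chi_def \<theta>_def c_def by (rule arg_cong2[where f="(/)"]) (auto intro: sum.cong)
  have prod: "acoef k \<Delta> * cnj (acoef k \<Delta>) =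
     (\<Sum>P\<in>SG. \<Sum>P'\<in>SG. chi P * chi P' * cis (2 * pi * dotp d (\<lambda>i. k (P i) - k (P' i)) \<Delta>)) / of_real (c\<^sup>2)" for \<Delta>
  proof -
    have "acoef k \<Delta> * cnj (acoef k \<Delta>) = (\<Sum>P\<in>SG. chi P * cis (\<theta> P \<Delta>)) * (\<Sum>P'\<in>SG. cnj (chi P') * cnj (cis (\<theta> P' \<Delta>))) / of_real (c\<^sup>2)"
      unfolding aeq by (simp add: power2_eq_square cnj_sum)
    also have "\<dots> = (\<Sum>P\<in>SG. \<Sum>P'\<in>SG. chi P * chi P' * (cis (\<theta> P \<Delta>) * cnj (cis (\<theta> P' \<Delta>)))) / of_real (c\<^sup>2)"
      using cchi by (simp add: sum_product mult_ac)
    also have "\<dots> = (\<Sum>P\<in>SG. \<Sum>P'\<in>SG. chi P * chi P' * cis (2 * pi * dotp d (\<lambda>i. k (P i) - k (P' i)) \<Delta>)) / of_real (c\<^sup>2)"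
    proof -
      have "cis (\<theta> P \<Delta>) * cnj (cis (\<theta> P' \<Delta>)) = cis (2 * pi * dotp d (\<lambda>i. k (P i) - k (P' i)) \<Delta>)" for P P'
      proof -
        have "cis (\<theta> P \<Delta>) * cnj (cis (\<theta> P' \<Delta>)) = cis (\<theta> P \<Delta> - \<theta> P' \<Delta>)"
          by (simp add: cis_cnj cis_mult)
        also have "\<theta> P \<Delta> - \<theta> P' \<Delta> = 2 * pi * (dotp d (k \<circ> P) \<Delta> - dotp d (k \<circ> P') \<Delta>)"
          by (simp add: \<theta>_def algebra_simps)
        also have "dotp d (k \<circ> P) \<Delta> - dotp d (k \<circ> P') \<Delta> = dotp d (\<lambda>i. k (P i) - k (P' i)) \<Delta>"
          by (simp add: dotp_diff o_def)
        finally show ?thesis .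
      qed
      thus ?thesis by simp
    qed
    finally show ?thesis .
  qed
  have integ: "integrable (cube_measure d) (\<lambda>\<Delta>. cis (2 * pi * dotp d v \<Delta>))" for v
    by (rule finite_measure.integrable_const_bound[where B=1, OF fin_cube]) (auto simp: dotp_def cube_measure_def)
  have "(LINT \<Delta>|cube_measure d. (cmod (acoef k \<Delta>))\<^sup>2) = (LINT \<Delta>|cube_measure d. Re (acoef k \<Delta> * cnj (acoef k \<Delta>)))"
    by (rule Bochner_Integration.integral_cong) (auto simp: complex_mult_cnj cmod_power2)
  also have "\<dots> = Re (LINT \<Delta>|cube_measure d. acoef k \<Delta> * cnj (acoef k \<Delta>))" 
  proof (rule integral_bounded_linear[OF bounded_linear_Re])
    show "integrable (cube_measure d) (\<lambda>\<Delta>. acoef k \<Delta> * cnj (acoef k \<Delta>))"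
    proof (rule finite_measure.integrable_const_bound[where B=1, OF fin_cube])
      show "AE \<Delta> in cube_measure d. norm (acoef k \<Delta> * cnj (acoef k \<Delta>)) \<le> 1"
        using acoef_norm by (auto simp: norm_mult intro!: mult_le_one)
      show "(\<lambda>\<Delta>. acoef k \<Delta> * cnj (acoef k \<Delta>)) \<in> borel_measurable (cube_measure d)" by measurable
    qed
  qed
  also have "(LINT \<Delta>|cube_measure d. acoef k \<Delta> * cnj (acoef k \<Delta>))
     = (\<Sum>P\<in>SG. \<Sum>P'\<in>SG. chi P * chi P' * (LINT \<Delta>|cube_measure d. cis (2 * pi * dotp d (\<lambda>i. k (P i) - k (P' i)) \<Delta>))) / of_real (c\<^sup>2)"
    unfolding prod
    by (simp add: integral_sum integ integrable_sum integrable_mult_right)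
  also have "\<dots> = (\<Sum>P\<in>SG. \<Sum>P'\<in>SG. of_real (if cP k P \<and> (\<forall>i\<in>{1..d}. k (P i) = k (P' i)) then 1 else 0)) / of_real (c\<^sup>2)"
  proof -
    have "chi P * chi P' * (LINT \<Delta>|cube_measure d. cis (2 * pi * dotp d (\<lambda>i. k (P i) - k (P' i)) \<Delta>))
        = of_real (if cP k P \<and> (\<forall>i\<in>{1..d}. k (P i) = k (P' i)) then 1 else 0)" for P P'
    proof (cases "\<forall>i\<in>{1..d}. k (P i) = k (P' i)")
      case True
      hence "cP k P = cP k P'" unfolding cP_def using idot_comp_dep[of "k \<circ> P" "k \<circ> P'" z] by simp
      thus ?thesis using True by (simp add: char_cube chi_def)
    next
      case False
      have "\<not> (\<forall>i\<in>{1..d}. k (P i) - k (P' i) = 0)" using False by auto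
      thus ?thesis using False by (simp only: char_cube if_False) simp
    qed
    thus ?thesis by simp
  qed
  finally show ?thesis by (simp add: ECnt_def c_def)
qed

end

context setting
begin

abbreviation rr :: "(nat \<Rightarrow> int) \<Rightarrow> real" where "rr k \<equiv> rfun R \<alpha> \<beta>0 \<beta>1 {1..d} k"

lemma comp_inv_id2: assumes "P \<in> SG" shows "k \<circ> P \<circ> inv P = k"
  using permutes_inverses(1)[OF SG_perm[OF assms]] by (auto simp: fun_eq_iff)

lemma count_stab:
  assumes P: "P \<in> SG"
  shows "(\<Sum>P'\<in>SG. if A \<and> (\<forall>i\<in>{1..d}. g i = g (inv P (P' i))) then 1 else 0 :: real)
       = (if A then real (Mfact {1..d} I g) else 0)"
proof -
  have bij: "bij_betw (\<lambda>P'. inv P \<circ> P') SG SG"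
  proof (rule bij_betwI[where g="\<lambda>Q. P \<circ> Q"])
    show "(\<lambda>P'. inv P \<circ> P') \<in> SG \<rightarrow> SG" using SG_comp SG_inv P by auto
    show "(\<lambda>Q. P \<circ> Q) \<in> SG \<rightarrow> SG" using SG_comp P by auto
    fix x assume "x \<in> SG"
    show "P \<circ> (inv P \<circ> x) = x" using permutes_inverses(1)[OF SG_perm[OF P]] by (auto simp: fun_eq_iff)
    show "inv P \<circ> (P \<circ> x) = x" using permutes_inverses(2)[OF SG_perm[OF P]] by (auto simp: fun_eq_iff)
  qed
  have "(\<Sum>P'\<in>SG. if A \<and> (\<forall>i\<in>{1..d}. g i = g (inv P (P' i))) then 1 else 0 :: real)
      = (\<Sum>Q\<in>SG. if A \<and> (\<forall>i\<in>{1..d}. g i = g (Q i)) then 1 else 0 :: real)"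
    using sum.reindex_bij_betw[OF bij, of "\<lambda>Q. if A \<and> (\<forall>i\<in>{1..d}. g i = g (Q i)) then 1 else 0 :: real"]
    by simp
  also have "\<dots> = (if A then real (card {Q \<in> SG. \<forall>i\<in>{1..d}. g i = g (Q i)}) else 0)"
    using SG_finite by (simp add: sum.inter_filter[symmetric])
  also have "{Q \<in> SG. \<forall>i\<in>{1..d}. g i = g (Q i)} = {Q \<in> Sset {1..d} I. \<forall>j\<in>{1..d}. g (Q j) = g j}"
    by (auto simp: SG_def)
  finally show ?thesis by (simp add: Mfact_def)
qed

lemma ECnt_sum:
  assumes F: "finite F" "F \<subseteq> ZZ {1..d}" and cl: "\<And>k P. k \<in> F \<Longrightarrow> P \<in> SG \<Longrightarrow> k \<circ> P \<in> F"
  shows "(\<Sum>k\<in>F. ECnt k / (real (card SG))\<^sup>2 / rr k) = (\<Sum>g\<in>F. tau {1..d} g * ind (idot {1..d} g z))"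
proof -
  define c where "c = real (card SG)"
  have cpos: "c > 0" using SG_card_pos by (simp add: c_def)
  define H where "H P k = (\<Sum>P'\<in>SG. if cP k P \<and> (\<forall>i\<in>{1..d}. k (P i) = k (P' i)) then 1 else 0 :: real) / rr k" for P k
  have inner: "(\<Sum>k\<in>F. H P k) = (\<Sum>g\<in>F. (if int n dvd idot {1..d} g z then real (Mfact {1..d} I g) else 0) / rr g)"
    if P: "P \<in> SG" for P
  proof -
    have bij: "bij_betw (\<lambda>g. g \<circ> inv P) F F"
    proof (rule bij_betwI[where g="\<lambda>k. k \<circ> P"])
      show "(\<lambda>g. g \<circ> inv P) \<in> F \<rightarrow> F" using cl SG_inv P by auto
      show "(\<lambda>k. k \<circ> P) \<in> F \<rightarrow> F" using cl P by auto
      fix x show "x \<circ> inv P \<circ> P = x" by (rule comp_inv_id[OF P])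
      show "x \<circ> P \<circ> inv P = x" by (rule comp_inv_id2[OF P])
    qed
    have "(\<Sum>k\<in>F. H P k) = (\<Sum>g\<in>F. H P (g \<circ> inv P))"
      using sum.reindex_bij_betw[OF bij, of "H P"] by simp
    also have "\<dots> = (\<Sum>g\<in>F. (if int n dvd idot {1..d} g z then real (Mfact {1..d} I g) else 0) / rr g)"
    proof (rule sum.cong[OF refl])
      fix g assume g: "g \<in> F"
      have e1: "cP (g \<circ> inv P) P = (int n dvd idot {1..d} g z)"
        unfolding cP_def using comp_inv_id[OF P, of g] by simp
      have e2: "(g \<circ> inv P) (P i) = g i" for i using fun_cong[OF comp_inv_id[OF P, of g], of i] by simp
      have e3: "rr (g \<circ> inv P) = rr g" by (rule rfun_comp[OF SG_inv[OF P]])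
      have "H P (g \<circ> inv P) = (\<Sum>P'\<in>SG. if int n dvd idot {1..d} g z \<and> (\<forall>i\<in>{1..d}. g i = g (inv P (P' i))) then 1 else 0 :: real) / rr g"
        unfolding H_def e1 e2 e3 by simp
      also have "\<dots> = (if int n dvd idot {1..d} g z then real (Mfact {1..d} I g) else 0) / rr g"
        by (simp only: count_stab[OF P])
      finally show "H P (g \<circ> inv P) = (if int n dvd idot {1..d} g z then real (Mfact {1..d} I g) else 0) / rr g" .
    qed
    finally show ?thesis .
  qed
  have "(\<Sum>k\<in>F. ECnt k / c\<^sup>2 / rr k) = (\<Sum>k\<in>F. (\<Sum>P\<in>SG. H P k)) / c\<^sup>2"
  proof -
    have "ECnt k / c\<^sup>2 / rr k = (\<Sum>P\<in>SG. H P k) / c\<^sup>2" for k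
      by (simp add: ECnt_def H_def sum_divide_distrib mult.commute)
    thus ?thesis by (simp add: sum_divide_distrib[symmetric])
  qed
  also have "(\<Sum>k\<in>F. (\<Sum>P\<in>SG. H P k)) = (\<Sum>P\<in>SG. \<Sum>k\<in>F. H P k)" by (rule sum.swap)
  also have "\<dots> = (\<Sum>P\<in>SG. \<Sum>g\<in>F. (if int n dvd idot {1..d} g z then real (Mfact {1..d} I g) else 0) / rr g)"
    by (rule sum.cong[OF refl]) (rule inner)
  also have "\<dots> = c * (\<Sum>g\<in>F. (if int n dvd idot {1..d} g z then real (Mfact {1..d} I g) else 0) / rr g)"
    by (simp add: c_def)
  finally have "(\<Sum>k\<in>F. ECnt k / c\<^sup>2 / rr k) = (\<Sum>g\<in>F. (if int n dvd idot {1..d} g z then real (Mfact {1..d} I g) else 0) / rr g) / c"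
    using cpos by (simp add: power2_eq_square)
  also have "\<dots> = (\<Sum>g\<in>F. tau {1..d} g * ind (idot {1..d} g z))"
    unfolding sum_divide_distrib
    by (rule sum.cong[OF refl]) (simp add: tau_def Mq_def ind_def c_def SG_def dvd_eq_mod_eq_0)
  finally show ?thesis by (simp add: c_def)
qed

end

context setting
begin

definition FF :: "nat \<Rightarrow> (nat \<Rightarrow> int) set" where
  "FF m = {k \<in> Zs. \<forall>i\<in>{1..d}. \<bar>k i\<bar> \<le> int m}"

definition GG :: "(nat \<Rightarrow> real) \<Rightarrow> real" where
  "GG \<Delta> = infsum (\<lambda>k. (cmod (acoef k \<Delta>))\<^sup>2 / rr k) Zs"

definition Gm :: "nat \<Rightarrow> (nat \<Rightarrow> real) \<Rightarrow> real" where
  "Gm m \<Delta> = (\<Sum>k\<in>FF m. (cmod (acoef k \<Delta>))\<^sup>2 / rr k)"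

lemma FF_finite: "finite (FF m)"
proof (rule finite_subset)
  show "FF m \<subseteq> PiE {1..d} (\<lambda>_. {- int m..int m})"
  proof
    fix k assume k: "k \<in> FF m"
    hence ext: "k \<in> extensional {1..d}" and b: "\<forall>i\<in>{1..d}. \<bar>k i\<bar> \<le> int m"
      by (auto simp: FF_def Zs_def ZZ_def PiE_def)
    have "k i \<in> {- int m..int m}" if i: "i \<in> {1..d}" for i
    proof -
      have "\<bar>k i\<bar> \<le> int m" using b i by blast
      thus ?thesis by auto
    qed
    thus "k \<in> PiE {1..d} (\<lambda>_. {- int m..int m})" using ext by (auto simp: PiE_def Pi_def)
  qed
  show "finite (PiE {1..d} (\<lambda>_. {- int m..int m}))" by (rule finite_PiE) auto
qed

lemma FF_sub: "FF m \<subseteq> Zs" by (auto simp: FF_def)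

lemma FF_mono: "m \<le> m' \<Longrightarrow> FF m \<subseteq> FF m'"
  by (auto simp: FF_def)

lemma FF_cl: assumes k: "k \<in> FF m" and P: "P \<in> SG" shows "k \<circ> P \<in> FF m"
proof -
  have "\<bar>k (P i)\<bar> \<le> int m" if i: "i \<in> {1..d}" for i
  proof -
    have "P i \<in> {1..d}" by (rule permutes_maps[OF SG_perm[OF P] i])
    thus ?thesis using k by (auto simp: FF_def)
  qed
  thus ?thesis using comp_Zs[of k P] k P by (auto simp: FF_def)
qed

lemma FF_cofinal:
  assumes F: "finite F" "F \<subseteq> Zs" shows "\<exists>m. F \<subseteq> FF m"
proof
  define m where "m = (\<Sum>k\<in>F. \<Sum>i\<in>{1..d}. nat \<bar>k i\<bar>)"
  show "F \<subseteq> FF m"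
  proof
    fix k assume k: "k \<in> F"
    have "\<bar>k i\<bar> \<le> int m" if i: "i \<in> {1..d}" for i
    proof -
      have "nat \<bar>k i\<bar> \<le> (\<Sum>i\<in>{1..d}. nat \<bar>k i\<bar>)" by (rule member_le_sum) (use i in auto)
      also have "\<dots> \<le> m" unfolding m_def by (rule member_le_sum[where f="\<lambda>k. \<Sum>i\<in>{1..d}. nat \<bar>k i\<bar>"]) (use k F in auto)
      finally show ?thesis by linarith
    qed
    thus "k \<in> FF m" using k F by (auto simp: FF_def)
  qed
qed

lemma term_nonneg: "0 \<le> (cmod (acoef k \<Delta>))\<^sup>2 / rfun R \<alpha> \<beta>0 \<beta>1 u k"
  using rfun_pos[of u k] by simp

lemma term_le: "(cmod (acoef k \<Delta>))\<^sup>2 / rfun R \<alpha> \<beta>0 \<beta>1 u k \<le> 1 / rfun R \<alpha> \<beta>0 \<beta>1 u k"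
proof -
  have "(cmod (acoef k \<Delta>))\<^sup>2 \<le> 1" using acoef_norm[of k \<Delta>] by (simp add: power_le_one)
  thus ?thesis using rfun_pos[of u k] by (simp add: divide_right_mono)
qed

lemma term_summable: "(\<lambda>k. (cmod (acoef k \<Delta>))\<^sup>2 / rr k) summable_on Zs"
proof (rule summable_on_comparison_test)
  show "(\<lambda>k. 1 / rr k) summable_on Zs"
    by (rule summable_on_subset[OF inv_rfun_summable Zs_sub]) simp
qed (auto simp: term_nonneg term_le)

lemma GG_SUP: "ennreal (GG \<Delta>) = (SUP m. ennreal (Gm m \<Delta>))"
proof -
  have "ennreal (GG \<Delta>) = (SUP F\<in>{F. finite F \<and> F \<subseteq> Zs}. ennreal (\<Sum>k\<in>F. (cmod (acoef k \<Delta>))\<^sup>2 / rr k))"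
    unfolding GG_def by (rule infsum_nonneg_is_SUPREMUM_ennreal[OF term_summable term_nonneg])
  also have "\<dots> = (SUP m. ennreal (Gm m \<Delta>))"
  proof (rule SUP_eq)
    fix F assume "F \<in> {F. finite F \<and> F \<subseteq> Zs}"
    hence F: "finite F" "F \<subseteq> Zs" by auto
    obtain m where "F \<subseteq> FF m" using FF_cofinal[OF F] by blast
    hence "(\<Sum>k\<in>F. (cmod (acoef k \<Delta>))\<^sup>2 / rr k) \<le> Gm m \<Delta>"
      unfolding Gm_def by (intro sum_mono2 FF_finite) (auto simp: term_nonneg)
    thus "\<exists>j\<in>UNIV. ennreal (\<Sum>k\<in>F. (cmod (acoef k \<Delta>))\<^sup>2 / rr k) \<le> ennreal (Gm j \<Delta>)"
      by (auto intro: ennreal_leI)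
  next
    fix m :: nat
    show "\<exists>F\<in>{F. finite F \<and> F \<subseteq> Zs}. ennreal (Gm m \<Delta>) \<le> ennreal (\<Sum>k\<in>F. (cmod (acoef k \<Delta>))\<^sup>2 / rr k)"
      using FF_finite FF_sub by (auto simp: Gm_def)
  qed
  finally show ?thesis .
qed

lemma Gm_meas[measurable]: "Gm m \<in> borel_measurable (cube_measure d)"
  unfolding Gm_def by measurable

lemma Gm_integrable: "integrable (cube_measure d) (Gm m)"
  unfolding Gm_def
proof (rule Bochner_Integration.integrable_sum)
  fix k
  show "integrable (cube_measure d) (\<lambda>\<Delta>. (cmod (acoef k \<Delta>))\<^sup>2 / rr k)"
    by (rule finite_measure.integrable_const_bound[where B="1 / rr k", OF fin_cube])
       (auto intro!: AE_I2 simp: abs_of_pos[OF rfun_pos] term_le)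
qed

lemma Gm_integral: "(LINT \<Delta>|cube_measure d. Gm m \<Delta>) \<le> Sval"
proof -
  have "(LINT \<Delta>|cube_measure d. Gm m \<Delta>) = (\<Sum>k\<in>FF m. (LINT \<Delta>|cube_measure d. (cmod (acoef k \<Delta>))\<^sup>2) / rr k)"
    unfolding Gm_def
  proof (subst Bochner_Integration.integral_sum)
    fix k
    show "integrable (cube_measure d) (\<lambda>\<Delta>. (cmod (acoef k \<Delta>))\<^sup>2 / rr k)"
      by (rule finite_measure.integrable_const_bound[where B="1 / rr k", OF fin_cube])
         (auto intro!: AE_I2 simp: abs_of_pos[OF rfun_pos] term_le)
  qed simp
  also have "\<dots> = (\<Sum>k\<in>FF m. ECnt k / (real (card SG))\<^sup>2 / rr k)" by (simp add: acoef_int)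
  also have "\<dots> = (\<Sum>g\<in>FF m. tau {1..d} g * ind (idot {1..d} g z))"
  proof (rule ECnt_sum)
    show "FF m \<subseteq> ZZ {1..d}" using FF_sub[of m] by (auto simp: Zs_def)
  qed (use FF_finite FF_cl in auto)
  also have "\<dots> \<le> Sval" unfolding Sval_def
  proof (rule finite_sum_le_infsum)
    show "(\<lambda>h. tau {1..d} h * ind (idot {1..d} h z)) summable_on Zs"
      by (rule summable_on_subset[OF sm_tau Zs_sub]) (auto simp: ind_nonneg ind_le1)
  qed (use FF_finite FF_sub tau_nonneg ind_nonneg in auto)
  finally show ?thesis .
qed

lemma exists_Delta: "\<exists>\<Delta>\<in>cube d. GG \<Delta> \<le> Sval"
proof (rule ccontr)
  assume "\<not> (\<exists>\<Delta>\<in>cube d. GG \<Delta> \<le> Sval)"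
  hence gt: "\<forall>\<Delta>\<in>space (cube_measure d). Sval < GG \<Delta>" by (auto simp: space_cube)
  have inc: "incseq (\<lambda>m \<Delta>. ennreal (Gm m \<Delta>))"
    by (auto simp: incseq_def le_fun_def Gm_def term_nonneg intro!: ennreal_leI sum_mono2 FF_finite FF_mono)
  have GGm: "(\<lambda>\<Delta>. ennreal (GG \<Delta>)) \<in> borel_measurable (cube_measure d)"
    unfolding GG_SUP by measurable
  have "(\<integral>\<^sup>+\<Delta>. ennreal (GG \<Delta>) \<partial>cube_measure d) = (\<integral>\<^sup>+\<Delta>. (SUP m. ennreal (Gm m \<Delta>)) \<partial>cube_measure d)"
    by (simp add: GG_SUP)
  also have "\<dots> = (SUP m. (\<integral>\<^sup>+\<Delta>. ennreal (Gm m \<Delta>) \<partial>cube_measure d))"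
    by (rule nn_integral_monotone_convergence_SUP[OF inc]) simp
  also have "\<dots> = (SUP m. ennreal (LINT \<Delta>|cube_measure d. Gm m \<Delta>))"
    by (rule SUP_cong[OF refl], rule nn_integral_eq_integral[OF Gm_integrable])
       (auto simp: Gm_def intro!: AE_I2 sum_nonneg term_nonneg)
  also have "\<dots> \<le> ennreal Sval"
    by (rule SUP_least) (use Gm_integral in \<open>auto intro: ennreal_leI\<close>)
  finally have le: "(\<integral>\<^sup>+\<Delta>. ennreal (GG \<Delta>) \<partial>cube_measure d) \<le> ennreal Sval" .
  have cst: "(\<integral>\<^sup>+\<Delta>. ennreal Sval \<partial>cube_measure d) = ennreal Sval"
    by (simp add: emeasure_cube)
  have "(\<integral>\<^sup>+\<Delta>. ennreal Sval \<partial>cube_measure d) < (\<integral>\<^sup>+\<Delta>. ennreal (GG \<Delta>) \<partial>cube_measure d)"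
  proof (rule nn_integral_less)
    show "(\<integral>\<^sup>+\<Delta>. ennreal Sval \<partial>cube_measure d) \<noteq> \<infinity>" using cst by simp
    show "AE \<Delta> in cube_measure d. ennreal Sval \<le> ennreal (GG \<Delta>)"
    proof (rule AE_I2)
      fix \<Delta> assume "\<Delta> \<in> space (cube_measure d)"
      hence "Sval \<le> GG \<Delta>" using gt by (simp add: less_imp_le)
      thus "ennreal Sval \<le> ennreal (GG \<Delta>)" by (rule ennreal_leI)
    qed
    show "\<not> (AE \<Delta> in cube_measure d. ennreal (GG \<Delta>) \<le> ennreal Sval)"
    proof
      assume "AE \<Delta> in cube_measure d. ennreal (GG \<Delta>) \<le> ennreal Sval"
      then obtain N where N: "{x \<in> space (cube_measure d). \<not> ennreal (GG x) \<le> ennreal Sval} \<subseteq> N"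
        "emeasure (cube_measure d) N = 0" "N \<in> sets (cube_measure d)" by (rule AE_E)
      have "space (cube_measure d) \<subseteq> N"
      proof
        fix x assume x: "x \<in> space (cube_measure d)"
        have S0: "0 \<le> Sval" unfolding Sval_def by (rule infsum_nonneg) (simp add: tau_nonneg ind_nonneg)
        have "Sval < GG x" using gt x by blast
        hence "\<not> GG x \<le> Sval" by simp
        hence "\<not> ennreal (GG x) \<le> ennreal Sval" using S0 by (simp add: ennreal_le_iff)
        thus "x \<in> N" using N(1) x by blast
      qed
      hence "emeasure (cube_measure d) (space (cube_measure d)) \<le> emeasure (cube_measure d) N"
        by (rule emeasure_mono) (use N in auto)
      thus False using N(2) emeasure_cube by simp
    qed
  qed (use GGm in auto)
  thus False using le cst by simp
qed

end

lemma cis_shift_int: "cis (2 * pi * (x + real_of_int N)) = cis (2 * pi * x)"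
proof -
  have "cis (2 * pi * (x + real_of_int N)) = cis (2 * pi * x + 2 * pi * real_of_int N)"
    by (simp add: algebra_simps)
  also have "\<dots> = cis (2 * pi * x) * cis (2 * pi * real_of_int N)" by (rule cis_mult[symmetric])
  also have "cis (2 * pi * real_of_int N) = 1" by (rule cis_multiple_2pi) simp
  finally show ?thesis by simp
qed

lemma cis_eq1_iff: "cis (2 * pi * x) = 1 \<longleftrightarrow> x \<in> \<int>"
proof
  assume "cis (2 * pi * x) = 1"
  hence "cos (2 * pi * x) = 1" by (metis cis.sel(1) one_complex.sel(1))
  then obtain k :: int where "2 * pi * x = real_of_int k * 2 * pi" using cos_one_2pi_int by blast
  hence "x = real_of_int k" by simp
  thus "x \<in> \<int>" by simp
next
  assume "x \<in> \<int>" thus "cis (2 * pi * x) = 1" by (rule cis_multiple_2pi)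
qed

lemma root_sum:
  fixes m :: int and n :: nat
  assumes n: "n > 0"
  shows "(\<Sum>j<n. cis (2 * pi * (real j * real_of_int m / real n))) = (if int n dvd m then of_nat n else 0)"
proof -
  define \<omega> where "\<omega> = cis (2 * pi * (real_of_int m / real n))"
  have pw: "cis (2 * pi * (real j * real_of_int m / real n)) = \<omega> ^ j" for j
  proof -
    have "\<omega> ^ j = cis (real j * (2 * pi * (real_of_int m / real n)))" unfolding \<omega>_def by (rule Complex.DeMoivre)
    moreover have "real j * (2 * pi * (real_of_int m / real n)) = 2 * pi * (real j * real_of_int m / real n)"
      by simp
    ultimately show ?thesis by (simp add: mult_ac)
  qed
  have "(\<Sum>j<n. cis (2 * pi * (real j * real_of_int m / real n))) = (\<Sum>j<n. \<omega> ^ j)"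
    by (rule sum.cong[OF refl]) (rule pw)
  also have "\<dots> = (if \<omega> = 1 then of_nat n else (1 - \<omega> ^ n) / (1 - \<omega>))" by (rule sum_gp_strict)
  also have "\<omega> ^ n = 1"
  proof -
    have "\<omega> ^ n = cis (2 * pi * (real n * real_of_int m / real n))" by (rule pw[symmetric])
    also have "\<dots> = cis (2 * pi * real_of_int m)" using n by simp
    also have "\<dots> = 1" by (rule cis_multiple_2pi) simp
    finally show ?thesis .
  qed
  also have "(\<omega> = 1) = (int n dvd m)"
  proof -
    have "(\<omega> = 1) = (real_of_int m / real n \<in> \<int>)" unfolding \<omega>_def by (rule cis_eq1_iff)
    also have "\<dots> = (int n dvd m)"
    proof
      assume "real_of_int m / real n \<in> \<int>"
      then obtain k where "real_of_int m / real n = real_of_int k" by (auto elim: Ints_cases)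
      hence "m = int n * k" using n by (simp add: field_simps) (metis of_int_eq_iff of_int_mult of_int_of_nat_eq)
      thus "int n dvd m" by simp
    next
      assume "int n dvd m"
      then obtain k where "m = int n * k" by (auto elim: dvdE)
      thus "real_of_int m / real n \<in> \<int>" using n by simp
    qed
    finally show ?thesis .
  qed
  finally show ?thesis by simp
qed

context setting
begin

lemma Fspace_props:
  assumes f: "f \<in> Fspace R \<alpha> \<beta>0 \<beta>1 d"
  shows "(\<lambda>k. (cmod (fourier_coeff d f k))\<^sup>2 * rr k) summable_on ZZ {1..d}"
    and "\<And>x. x \<in> cube d \<Longrightarrow> f x = infsum (\<lambda>k. fourier_coeff d f k * cis (2 * pi * dotp d k x)) (ZZ {1..d})"
  using f by (auto simp: Fspace_def)

lemma amgm_coeff: "cmod c \<le> ((cmod c)\<^sup>2 * rfun R \<alpha> \<beta>0 \<beta>1 u k + 1 / rfun R \<alpha> \<beta>0 \<beta>1 u k) / 2"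
proof -
  define r where "r = rfun R \<alpha> \<beta>0 \<beta>1 u k"
  have r: "r > 0" unfolding r_def by (rule rfun_pos)
  have "0 \<le> (cmod c * r - 1)\<^sup>2" by simp
  hence "2 * (cmod c * r) \<le> (cmod c)\<^sup>2 * r\<^sup>2 + 1" by (simp add: power2_eq_square algebra_simps)
  have "2 * cmod c = (2 * (cmod c * r)) / r" using r by simp
  also have "\<dots> \<le> ((cmod c)\<^sup>2 * r\<^sup>2 + 1) / r"
    by (rule divide_right_mono[OF \<open>2 * (cmod c * r) \<le> (cmod c)\<^sup>2 * r\<^sup>2 + 1\<close>]) (use r in simp)
  also have "\<dots> = (cmod c)\<^sup>2 * r + 1 / r" using r by (simp add: field_simps power2_eq_square)
  finally have "2 * cmod c \<le> (cmod c)\<^sup>2 * r + 1 / r" .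
  thus ?thesis by (simp add: r_def)
qed

lemma coeff_abs_summable:
  assumes f: "f \<in> Fspace R \<alpha> \<beta>0 \<beta>1 d"
  shows "(\<lambda>k. cmod (fourier_coeff d f k)) summable_on ZZ {1..d}"
proof (rule summable_on_comparison_test)
  show "(\<lambda>k. ((cmod (fourier_coeff d f k))\<^sup>2 * rr k + 1 / rr k) / 2) summable_on ZZ {1..d}"
    by (intro summable_on_divide_const summable_on_add Fspace_props(1)[OF f])
       (simp add: ZZ_def inv_rfun_summable)
next
  fix k show "cmod (fourier_coeff d f k) \<le> ((cmod (fourier_coeff d f k))\<^sup>2 * rr k + 1 / rr k) / 2"
    by (rule amgm_coeff)
qed simp

end

context setting
begin

definition pt :: "nat \<Rightarrow> (nat \<Rightarrow> real) \<Rightarrow> (nat \<Rightarrow> real)" where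
  "pt j \<Delta> = (\<lambda>i. if i \<in> {1..d} then frac (real j * real_of_int (z i) / real n + \<Delta> i) else undefined)"

lemma pt_cube: "pt j \<Delta> \<in> cube d"
  by (auto simp: pt_def cube_def PiE_def Pi_def extensional_def less_imp_le[OF frac_lt_1])

lemma perm_cube: "x \<in> cube d \<Longrightarrow> P \<in> SG \<Longrightarrow> (\<lambda>i. x (inv P i)) \<in> cube d"
proof -
  assume x: "x \<in> cube d" and P: "P \<in> SG"
  have Pi: "inv P permutes {1..d}" by (rule permutes_inv[OF SG_perm[OF P]])
  show ?thesis using x permutes_maps[OF Pi] permutes_not_in[OF Pi]
    by (auto simp: cube_def PiE_def Pi_def extensional_def)
qed

lemma sym_eval:
  assumes f: "f \<in> SymSpace R \<alpha> \<beta>0 \<beta>1 d I" and x: "x \<in> cube d" and P: "P \<in> SG"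
  shows "f x = f (\<lambda>i. x (inv P i))"
proof -
  have H: "\<forall>x\<in>cube d. \<forall>P\<in>Sset {1..d} I. f x = f (\<lambda>j. x (P j))" using f by (simp add: SymSpace_def)
  have "inv P \<in> Sset {1..d} I" using SG_inv[OF P] by (simp add: SG_def)
  thus ?thesis using H x by blast
qed

lemma dotp_perm: "P \<in> SG \<Longrightarrow> dotp d k (\<lambda>i. x (inv P i)) = dotp d (k \<circ> P) x"
proof -
  assume P: "P \<in> SG"
  have Pp: "P permutes {1..d}" by (rule SG_perm[OF P])
  have "dotp d (k \<circ> P) x = (\<Sum>m\<in>{1..d}. (\<lambda>i. real_of_int (k i) * x (inv P i)) (P m))"
    unfolding dotp_def by (rule sum.cong) (auto simp: permutes_inverses(2)[OF Pp])
  also have "\<dots> = dotp d k (\<lambda>i. x (inv P i))"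
    unfolding dotp_def by (rule sum.reindex_bij_betw[OF permutes_imp_bij[OF Pp]])
  finally show ?thesis by simp
qed

lemma cis_pt: "cis (2 * pi * dotp d g (pt j \<Delta>))
   = cis (2 * pi * (real j * real_of_int (idot {1..d} g z) / real n)) * cis (2 * pi * dotp d g \<Delta>)"
proof -
  define t where "t i = real j * real_of_int (z i) / real n + \<Delta> i" for i
  define N where "N = (\<Sum>i\<in>{1..d}. - g i * \<lfloor>t i\<rfloor>)"
  have "dotp d g (pt j \<Delta>) = (\<Sum>i\<in>{1..d}. real_of_int (g i) * (t i - real_of_int \<lfloor>t i\<rfloor>))"
    unfolding dotp_def pt_def t_def by (rule sum.cong) (auto simp: frac_def)
  also have "\<dots> = (real j * real_of_int (idot {1..d} g z) / real n + dotp d g \<Delta>) + real_of_int N"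
    by (simp add: t_def N_def idot_def dotp_def algebra_simps sum.distrib sum_distrib_left
        sum_divide_distrib sum_subtractf sum_negf)
  finally have e: "dotp d g (pt j \<Delta>) = (real j * real_of_int (idot {1..d} g z) / real n + dotp d g \<Delta>) + real_of_int N" .
  show ?thesis unfolding e cis_shift_int by (simp add: distrib_left cis_mult[symmetric])
qed

end

context setting
begin

lemma summable_by_coeff:
  assumes f: "f \<in> Fspace R \<alpha> \<beta>0 \<beta>1 d" and b: "\<And>k. cmod (g k) \<le> 1"
  shows "(\<lambda>k. fourier_coeff d f k * g k) summable_on ZZ {1..d}"
proof (rule abs_summable_summable)
  show "(\<lambda>k. norm (fourier_coeff d f k * g k)) summable_on ZZ {1..d}"
  proof (rule summable_on_comparison_test[OF coeff_abs_summable[OF f]])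
    fix k
    show "norm (fourier_coeff d f k * g k) \<le> cmod (fourier_coeff d f k)"
      using b[of k] by (simp add: norm_mult mult_left_le)
  qed simp
qed

lemma lattice_repr:
  assumes f: "f \<in> SymSpace R \<alpha> \<beta>0 \<beta>1 d I"
  shows "lattice_rule d n z \<Delta> f = infsum (\<lambda>k. fourier_coeff d f k * acoef k \<Delta>) (ZZ {1..d})"
proof -
  have fF: "f \<in> Fspace R \<alpha> \<beta>0 \<beta>1 d" using f by (simp add: SymSpace_def)
  define fh where "fh = fourier_coeff d f"
  define cc where "cc = (of_nat (card SG) :: complex)"
  have cc0: "cc \<noteq> 0" using SG_card_pos by (simp add: cc_def)
  define T where "T P j k = fh k * (cis (2 * pi * (real j * real_of_int (idot {1..d} (k \<circ> P) z) / real n))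
       * cis (2 * pi * dotp d (k \<circ> P) \<Delta>))" for P j k
  have Tsum: "T P j summable_on ZZ {1..d}" for P j
    unfolding T_def fh_def by (rule summable_by_coeff[OF fF]) (simp add: norm_mult)
  have step1: "f (pt j \<Delta>) = (\<Sum>P\<in>SG. infsum (T P j) (ZZ {1..d})) / cc" for j
  proof -
    have "infsum (T P j) (ZZ {1..d}) = f (pt j \<Delta>)" if P: "P \<in> SG" for P
    proof -
      have "f (pt j \<Delta>) = f (\<lambda>i. pt j \<Delta> (inv P i))" by (rule sym_eval[OF f pt_cube P])
      also have "\<dots> = infsum (\<lambda>k. fh k * cis (2 * pi * dotp d k (\<lambda>i. pt j \<Delta> (inv P i)))) (ZZ {1..d})"
        unfolding fh_def by (rule Fspace_props(2)[OF fF perm_cube[OF pt_cube P]])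
      also have "\<dots> = infsum (T P j) (ZZ {1..d})"
        by (rule infsum_cong) (simp add: T_def dotp_perm[OF P] cis_pt)
      finally show ?thesis by simp
    qed
    hence "(\<Sum>P\<in>SG. infsum (T P j) (ZZ {1..d})) = (\<Sum>P\<in>SG. f (pt j \<Delta>))" by simp
    also have "\<dots> = cc * f (pt j \<Delta>)" by (simp add: cc_def)
    finally show ?thesis using cc0 by simp
  qed
  have step3: "(\<Sum>j<n. \<Sum>P\<in>SG. T P j k) = fh k * (of_nat n * cc * acoef k \<Delta>)" for k
  proof -
    have "(\<Sum>j<n. \<Sum>P\<in>SG. T P j k) = (\<Sum>P\<in>SG. \<Sum>j<n. T P j k)" by (rule sum.swap)
    also have "\<dots> = (\<Sum>P\<in>SG. fh k * cis (2 * pi * dotp d (k \<circ> P) \<Delta>) *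
        (\<Sum>j<n. cis (2 * pi * (real j * real_of_int (idot {1..d} (k \<circ> P) z) / real n))))"
      by (simp add: T_def sum_distrib_left mult_ac)
    also have "\<dots> = (\<Sum>P\<in>SG. fh k * (of_nat n * (if cP k P then cis (2 * pi * dotp d (k \<circ> P) \<Delta>) else 0)))"
      by (rule sum.cong[OF refl]) (simp only: root_sum[OF n_pos], simp add: cP_def)
    also have "\<dots> = fh k * (of_nat n * (\<Sum>P\<in>SG. if cP k P then cis (2 * pi * dotp d (k \<circ> P) \<Delta>) else 0))"
      by (simp add: sum_distrib_left)
    also have "\<dots> = fh k * (of_nat n * cc * acoef k \<Delta>)"
      using cc0 by (simp add: acoef_def cc_def)
    finally show ?thesis .
  qed
  have "lattice_rule d n z \<Delta> f = of_real (1 / real n) * (\<Sum>j<n. f (pt j \<Delta>))"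
    by (simp add: lattice_rule_def pt_def)
  also have "(\<Sum>j<n. f (pt j \<Delta>)) = (\<Sum>j<n. \<Sum>P\<in>SG. infsum (T P j) (ZZ {1..d})) / cc"
    by (simp add: step1 sum_divide_distrib)
  also have "(\<Sum>j<n. \<Sum>P\<in>SG. infsum (T P j) (ZZ {1..d})) = (\<Sum>j<n. infsum (\<lambda>k. \<Sum>P\<in>SG. T P j k) (ZZ {1..d}))"
    by (rule sum.cong[OF refl], rule infsum_finite_sum[symmetric], rule SG_finite, rule Tsum)
  also have "\<dots> = infsum (\<lambda>k. \<Sum>j<n. \<Sum>P\<in>SG. T P j k) (ZZ {1..d})"
  proof (rule infsum_finite_sum[symmetric])
    fix j show "(\<lambda>k. \<Sum>P\<in>SG. T P j k) summable_on ZZ {1..d}"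
      by (rule summable_on_finite_sum[OF SG_finite Tsum])
  qed simp
  also have "\<dots> = infsum (\<lambda>k. (of_nat n * cc) * (fh k * acoef k \<Delta>)) (ZZ {1..d})"
    by (rule infsum_cong) (simp add: step3 mult_ac)
  also have "\<dots> = (of_nat n * cc) * infsum (\<lambda>k. fh k * acoef k \<Delta>) (ZZ {1..d})"
    by (rule infsum_cmult_right')
  finally show ?thesis using cc0 n_pos by (simp add: fh_def)
qed

end

lemma infsum_CS:
  fixes x y :: "'a \<Rightarrow> real"
  assumes nx: "\<And>k. 0 \<le> x k" and ny: "\<And>k. 0 \<le> y k"
    and sx: "(\<lambda>k. (x k)\<^sup>2) summable_on A" and sy: "(\<lambda>k. (y k)\<^sup>2) summable_on A"
  shows "(\<lambda>k. x k * y k) summable_on A"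
    and "infsum (\<lambda>k. x k * y k) A \<le> sqrt (infsum (\<lambda>k. (x k)\<^sup>2) A) * sqrt (infsum (\<lambda>k. (y k)\<^sup>2) A)"
proof -
  show sm: "(\<lambda>k. x k * y k) summable_on A"
  proof (rule summable_on_comparison_test)
    show "(\<lambda>k. ((x k)\<^sup>2 + (y k)\<^sup>2) / 2) summable_on A"
      by (intro summable_on_divide_const summable_on_add sx sy)
    fix k
    show "0 \<le> x k * y k" using nx ny by simp
    have "0 \<le> (x k - y k)\<^sup>2" by simp
    thus "x k * y k \<le> ((x k)\<^sup>2 + (y k)\<^sup>2) / 2" by (simp add: power2_eq_square algebra_simps)
  qed
  show "infsum (\<lambda>k. x k * y k) A \<le> sqrt (infsum (\<lambda>k. (x k)\<^sup>2) A) * sqrt (infsum (\<lambda>k. (y k)\<^sup>2) A)"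
  proof (rule infsum_le_finite_sums[OF sm])
    fix F assume F: "finite F" "F \<subseteq> A"
    have "(\<Sum>k\<in>F. x k * y k) = (\<Sum>k\<in>F. \<bar>x k\<bar> * \<bar>y k\<bar>)" using nx ny by simp
    also have "\<dots> \<le> L2_set x F * L2_set y F" by (rule L2_set_mult_ineq)
    also have "\<dots> \<le> sqrt (infsum (\<lambda>k. (x k)\<^sup>2) A) * sqrt (infsum (\<lambda>k. (y k)\<^sup>2) A)"
    proof (rule mult_mono)
      show "L2_set x F \<le> sqrt (infsum (\<lambda>k. (x k)\<^sup>2) A)"
        unfolding L2_set_def by (rule real_sqrt_le_mono, rule finite_sum_le_infsum[OF sx F]) simp
      show "L2_set y F \<le> sqrt (infsum (\<lambda>k. (y k)\<^sup>2) A)"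
        unfolding L2_set_def by (rule real_sqrt_le_mono, rule finite_sum_le_infsum[OF sy F]) simp
    qed (simp_all add: L2_set_def infsum_nonneg sum_nonneg)
    finally show "(\<Sum>k\<in>F. x k * y k) \<le> sqrt (infsum (\<lambda>k. (x k)\<^sup>2) A) * sqrt (infsum (\<lambda>k. (y k)\<^sup>2) A)" .
  qed
qed

context setting
begin

lemma zero0_ZZ: "zero0 \<in> ZZ {1..d}" by (simp add: zero0_def ZZ_def)

lemma ZZ_insert: "ZZ {1..d} = insert zero0 Zs" using zero0_ZZ by (auto simp: Zs_def)

lemma acoef_zero: "acoef zero0 \<Delta> = 1"
proof -
  have "(if cP zero0 P then cis (2 * pi * dotp d (zero0 \<circ> P) \<Delta>) else 0) = 1" if P: "P \<in> SG" for P
  proof -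
    have z: "(zero0 \<circ> P) i = 0" if "i \<in> {1..d}" for i
      using permutes_maps[OF SG_perm[OF P] that] by (simp add: zero0_def)
    have "idot {1..d} (zero0 \<circ> P) z = 0" using z by (simp add: idot_def)
    moreover have "dotp d (zero0 \<circ> P) \<Delta> = 0" using z by (simp add: dotp_def)
    ultimately show ?thesis by (simp add: cP_def)
  qed
  hence "(\<Sum>P\<in>SG. if cP zero0 P then cis (2 * pi * dotp d (zero0 \<circ> P) \<Delta>) else 0) = of_nat (card SG)"
    by simp
  thus ?thesis using SG_card_pos by (simp add: acoef_def)
qed

lemma integral_coeff0: "(LINT x|cube_measure d. f x) = fourier_coeff d f zero0"
proof -
  have "dotp d zero0 x = 0" for x by (simp add: dotp_def zero0_def)
  thus ?thesis by (simp add: fourier_coeff_def)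
qed

lemma error_bound:
  assumes f: "f \<in> SymSpace R \<alpha> \<beta>0 \<beta>1 d I" and nf: "Fnorm R \<alpha> \<beta>0 \<beta>1 d f \<le> 1"
  shows "(cmod ((LINT x|cube_measure d. f x) - lattice_rule d n z \<Delta> f))\<^sup>2 \<le> GG \<Delta>"
proof -
  have fF: "f \<in> Fspace R \<alpha> \<beta>0 \<beta>1 d" using f by (simp add: SymSpace_def)
  define fh where "fh = fourier_coeff d f"
  have smZZ: "(\<lambda>k. fh k * acoef k \<Delta>) summable_on ZZ {1..d}"
    unfolding fh_def by (rule summable_by_coeff[OF fF acoef_norm])
  have smZs: "(\<lambda>k. fh k * acoef k \<Delta>) summable_on Zs"
    by (rule summable_on_subset[OF smZZ]) (auto simp: Zs_def)
  have z0: "zero0 \<notin> Zs" by (simp add: Zs_def)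
  have "lattice_rule d n z \<Delta> f = infsum (\<lambda>k. fh k * acoef k \<Delta>) (insert zero0 Zs)"
    unfolding fh_def lattice_repr[OF f] ZZ_insert ..
  also have "\<dots> = fh zero0 + infsum (\<lambda>k. fh k * acoef k \<Delta>) Zs"
    by (subst infsum_insert[OF smZs z0]) (simp add: acoef_zero)
  finally have err: "(LINT x|cube_measure d. f x) - lattice_rule d n z \<Delta> f = - infsum (\<lambda>k. fh k * acoef k \<Delta>) Zs"
    by (simp add: integral_coeff0 fh_def)
  define x where "x k = cmod (fh k) * sqrt (rr k)" for k
  define y where "y k = cmod (acoef k \<Delta>) / sqrt (rr k)" for k
  have rp: "rr k > 0" for k by (rule rfun_pos)
  have xy: "x k * y k = cmod (fh k * acoef k \<Delta>)" for k
    using rp[of k] by (simp add: x_def y_def norm_mult)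
  have x2: "(x k)\<^sup>2 = (cmod (fh k))\<^sup>2 * rr k" for k using rp[of k] by (simp add: x_def power_mult_distrib)
  have y2: "(y k)\<^sup>2 = (cmod (acoef k \<Delta>))\<^sup>2 / rr k" for k using rp[of k] by (simp add: y_def power_divide)
  have sx: "(\<lambda>k. (x k)\<^sup>2) summable_on Zs"
    unfolding x2 fh_def by (rule summable_on_subset[OF Fspace_props(1)[OF fF]]) (auto simp: Zs_def)
  have sy: "(\<lambda>k. (y k)\<^sup>2) summable_on Zs" unfolding y2 by (rule term_summable)
  have sq: "0 \<le> sqrt (rr k)" for k using rp[of k] by simp
  have nx: "\<And>k. 0 \<le> x k" and ny: "\<And>k. 0 \<le> y k"
    using sq by (auto simp: x_def y_def)
  have X1: "infsum (\<lambda>k. (x k)\<^sup>2) Zs \<le> 1"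
  proof -
    have "infsum (\<lambda>k. (x k)\<^sup>2) Zs \<le> infsum (\<lambda>k. (x k)\<^sup>2) (ZZ {1..d})"
      unfolding x2 fh_def
      by (rule infsum_mono_neutral) (use Fspace_props(1)[OF fF] rp in \<open>auto simp: Zs_def less_imp_le intro: summable_on_subset\<close>)
    also have "\<dots> = Fnorm2 R \<alpha> \<beta>0 \<beta>1 d f" by (simp add: x2 fh_def Fnorm2_def)
    also have "\<dots> \<le> 1"
    proof -
      have "0 \<le> Fnorm2 R \<alpha> \<beta>0 \<beta>1 d f" unfolding Fnorm2_def by (rule infsum_nonneg) (use rp in \<open>auto simp: less_imp_le\<close>)
      thus ?thesis using nf by (simp add: Fnorm_def)
    qed
    finally show ?thesis .
  qed
  have "cmod (infsum (\<lambda>k. fh k * acoef k \<Delta>) Zs) \<le> infsum (\<lambda>k. x k * y k) Zs"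
  proof (rule norm_infsum_le)
    show "((\<lambda>k. fh k * acoef k \<Delta>) has_sum infsum (\<lambda>k. fh k * acoef k \<Delta>) Zs) Zs" using smZs by simp
    show "((\<lambda>k. x k * y k) has_sum infsum (\<lambda>k. x k * y k) Zs) Zs" using infsum_CS(1)[OF nx ny sx sy] by simp
  qed (simp add: xy)
  also have "\<dots> \<le> sqrt (infsum (\<lambda>k. (x k)\<^sup>2) Zs) * sqrt (infsum (\<lambda>k. (y k)\<^sup>2) Zs)"
    by (rule infsum_CS(2)[OF nx ny sx sy])
  also have "\<dots> \<le> 1 * sqrt (GG \<Delta>)"
  proof (rule mult_mono)
    show "sqrt (infsum (\<lambda>k. (x k)\<^sup>2) Zs) \<le> 1" using X1 by simp
    show "sqrt (infsum (\<lambda>k. (y k)\<^sup>2) Zs) \<le> sqrt (GG \<Delta>)" by (simp add: y2 GG_def)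
  qed (auto intro: infsum_nonneg)
  finally have "cmod ((LINT x|cube_measure d. f x) - lattice_rule d n z \<Delta> f) \<le> sqrt (GG \<Delta>)"
    unfolding err by simp
  moreover have "0 \<le> GG \<Delta>" unfolding GG_def by (rule infsum_nonneg) (simp add: term_nonneg)
  ultimately show ?thesis by (metis norm_ge_zero power_mono real_sqrt_pow2)
qed

end

lemma frac_add_frac: fixes x y :: real shows "frac (x + frac y) = frac (x + y)"
proof -
  have e: "x + frac y = (x + y) + real_of_int (- \<lfloor>y\<rfloor>)" by (simp add: frac_def)
  show ?thesis unfolding e by (simp add: frac_def)
qed

context setting
begin

lemma zero_fun_Sym: "(\<lambda>_. 0) \<in> SymSpace R \<alpha> \<beta>0 \<beta>1 d I \<and> Fnorm R \<alpha> \<beta>0 \<beta>1 d (\<lambda>_. 0) \<le> 1"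
proof -
  have fc: "fourier_coeff d (\<lambda>_. 0) k = 0" for k by (simp add: fourier_coeff_def)
  have "(\<lambda>_. 0) \<in> Fspace R \<alpha> \<beta>0 \<beta>1 d" by (simp add: Fspace_def fc)
  moreover have "Fnorm R \<alpha> \<beta>0 \<beta>1 d (\<lambda>_. 0) = 0" by (simp add: Fnorm_def Fnorm2_def fc)
  ultimately show ?thesis by (simp add: SymSpace_def)
qed

theorem main:
  "\<exists>\<Delta> :: nat \<Rightarrow> real. (\<forall>i\<in>{1..d}. 0 \<le> \<Delta> i \<and> \<Delta> i < 1) \<and>
     (\<forall>lam::real. 1 \<le> lam \<and> lam < 2 * \<alpha> \<longrightarrow>
        (wce (SymSpace R \<alpha> \<beta>0 \<beta>1 d I) (Fnorm R \<alpha> \<beta>0 \<beta>1 d)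
             (\<lambda>f. LINT x|cube_measure d. f x) (lattice_rule d n z \<Delta>))\<^sup>2
        \<le> ereal ((1 + cR) powr lam * Cdl R \<alpha> \<beta>0 \<beta>1 d I lam * max 1 (real (card I))
                 / real n powr lam))"
proof -
  obtain \<Delta>0 where \<Delta>0: "\<Delta>0 \<in> cube d" and G: "GG \<Delta>0 \<le> Sval" using exists_Delta by blast
  define \<Delta> where "\<Delta> i = frac (\<Delta>0 i)" for i
  have pts: "(\<lambda>i. if i \<in> {1..d} then frac (real j * real_of_int (z i) / real n + \<Delta> i) else undefined)
     = (\<lambda>i. if i \<in> {1..d} then frac (real j * real_of_int (z i) / real n + \<Delta>0 i) else undefined)" for j
    by (rule ext) (simp add: \<Delta>_def frac_add_frac)
  have LR: "lattice_rule d n z \<Delta> = lattice_rule d n z \<Delta>0"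
    by (rule ext) (simp only: lattice_rule_def pts)
  show ?thesis
  proof (intro exI conjI allI impI)
    show "\<forall>i\<in>{1..d}. 0 \<le> \<Delta> i \<and> \<Delta> i < 1" by (simp add: \<Delta>_def frac_lt_1)
    fix lam :: real assume lam: "1 \<le> lam \<and> lam < 2 * \<alpha>"
    define B where "B = (1 + cR) powr lam * Cdl R \<alpha> \<beta>0 \<beta>1 d I lam * max 1 (real (card I)) / real n powr lam"
    have KKe: "KK = max 1 (real (card I))" by (simp add: KK_def)
    have SB: "Sval \<le> B" using partC[of lam] lam by (simp add: B_def KKe)
    have S0: "0 \<le> Sval" unfolding Sval_def by (rule infsum_nonneg) (simp add: tau_nonneg ind_nonneg)
    have B0: "0 \<le> B" using S0 SB by linarith
    define W where "W = wce (SymSpace R \<alpha> \<beta>0 \<beta>1 d I) (Fnorm R \<alpha> \<beta>0 \<beta>1 d)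
             (\<lambda>f. LINT x|cube_measure d. f x) (lattice_rule d n z \<Delta>)"
    have Wle: "W \<le> ereal (sqrt B)"
      unfolding W_def wce_def
    proof (rule SUP_least)
      fix f assume "f \<in> {f \<in> SymSpace R \<alpha> \<beta>0 \<beta>1 d I. Fnorm R \<alpha> \<beta>0 \<beta>1 d f \<le> 1}"
      hence f: "f \<in> SymSpace R \<alpha> \<beta>0 \<beta>1 d I" "Fnorm R \<alpha> \<beta>0 \<beta>1 d f \<le> 1" by auto
      have "(cmod ((LINT x|cube_measure d. f x) - lattice_rule d n z \<Delta> f))\<^sup>2 \<le> B"
        unfolding LR using error_bound[OF f, of \<Delta>0] G SB by linarith
      hence "cmod ((LINT x|cube_measure d. f x) - lattice_rule d n z \<Delta> f) \<le> sqrt B"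
        using real_le_rsqrt by blast
      thus "ereal (cmod ((LINT x|cube_measure d. f x) - lattice_rule d n z \<Delta> f)) \<le> ereal (sqrt B)" by simp
    qed
    have W0: "0 \<le> W"
    proof -
      have "ereal (cmod ((LINT x|cube_measure d. (\<lambda>_. 0) x) - lattice_rule d n z \<Delta> (\<lambda>_. 0))) \<le> W"
        unfolding W_def wce_def by (rule SUP_upper) (use zero_fun_Sym in auto)
      moreover have "lattice_rule d n z \<Delta> (\<lambda>_. 0) = 0" by (simp add: lattice_rule_def)
      ultimately show ?thesis by (simp add: zero_ereal_def)
    qed
    obtain w where w: "W = ereal w" using W0 Wle by (cases W) auto
    have w0: "0 \<le> w" and wle: "w \<le> sqrt B" using W0 Wle w by auto
    have "w\<^sup>2 \<le> (sqrt B)\<^sup>2" using power_mono[OF wle w0, of 2] by simp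
    hence "w\<^sup>2 \<le> B" using B0 by simp
    thus "W\<^sup>2 \<le> ereal B" by (simp add: w power2_eq_square)
  qed
qed

end

theorem theorem4p5:
  fixes R :: "real \<Rightarrow> real" and cR \<alpha> \<beta>0 \<beta>1 :: real and d n :: nat
    and I :: "nat set" and z :: "nat \<Rightarrow> int"
  assumes R_pos: "\<forall>x\<ge>1. R x > 0"
    and cR: "cR \<ge> 1"
    and R_scale: "\<forall>k m :: nat. k \<ge> 1 \<longrightarrow> m \<ge> 1 \<longrightarrow>
        R (real m) / cR \<le> R (real (k * m)) / real k \<and> R (real (k * m)) / real k \<le> R (real m)"
    and alpha: "\<alpha> \<ge> 0"
    and muR: "summable (\<lambda>m. R (real (Suc m)) powr (- 2 * \<alpha>))"
    and beta: "\<beta>0 > 0" "\<beta>1 > 0"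
    and d: "d \<ge> 1"
    and I: "I \<subseteq> {1..d}"
    and n: "prime n" "real n \<ge> cR"
    and z1: "z 1 \<in> {1..int n - 1}"
    and zCBC: "\<forall>l\<in>{2..d}. z l \<in> {0..<int n} \<and>
        (\<forall>w\<in>{0..<int n}. Bfun R \<alpha> \<beta>0 \<beta>1 I n l z \<le> Bfun R \<alpha> \<beta>0 \<beta>1 I n l (z(l := w)))"
  shows "\<exists>\<Delta> :: nat \<Rightarrow> real. (\<forall>i\<in>{1..d}. 0 \<le> \<Delta> i \<and> \<Delta> i < 1) \<and>
     (\<forall>lam::real. 1 \<le> lam \<and> lam < 2 * \<alpha> \<longrightarrow>
        (wce (SymSpace R \<alpha> \<beta>0 \<beta>1 d I) (Fnorm R \<alpha> \<beta>0 \<beta>1 d)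
             (\<lambda>f. LINT x|cube_measure d. f x) (lattice_rule d n z \<Delta>))\<^sup>2
        \<le> ereal ((1 + cR) powr lam * Cdl R \<alpha> \<beta>0 \<beta>1 d I lam * max 1 (real (card I))
                 / real n powr lam))"
proof -
  interpret setting R cR \<alpha> \<beta>0 \<beta>1 d n I z
    by (intro setting.intro) (rule assms)+
  show ?thesis by (rule main)
qed


end
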